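(* Let $\Lambda$ be a finite $k$-graph without sources and $C$ a component. Then $C$ is a positive harmonic component if and only if $C$ is positive and for every component $D\subseteq\overline C\setminus C$ one has $\rho(A_i^D)\le\rho(A_i^C)$ for all $i=1,\dots,k$ and $(\rho(A_1^D),\dots,\rho(A_k^D))\neq(\rho(A_1^C),\dots,\rho(A_k^C))$.
   Context: A $k$-graph $(\Lambda,d)$ is a countable small category with functor $d:\Lambda\to\mathbb N^k$ having the unique factorisation property (for $d(\lambda)=m+n$ there are unique $\mu,\nu$ with $d(\mu)=m,d(\nu)=n,\lambda=\mu\nu$). $\Lambda^0=d^{-1}(0)$ are the vertices, $\Lambda^n=d^{-1}(n)$, $r,s$ range and source, $v\Lambda^nw=\{\lambda\in\Lambda^n:r(\lambda)=v,s(\lambda)=w\}$, $v\Lambda w=\bigcup_nv\Lambda^nw$, and for $V,W\subseteq\Lambda^0$, $V\Lambda W=\bigcup_{v\in V,w\in W}v\Lambda w$. Finite: each $\Lambda^n$ finite; without sources: $v\Lambda^n\neq\emptyset$ for all $v,n$. Vertex matrices $A_i(v,w)=|v\Lambda^{e_i}w|$, $A^n=\prod_iA_i^{n_i}$. Define $v\le w$ iff $v\Lambda w\ne\emptyset$ and $v\sim w$ iff $v\le w$ and $w\le v$; the classes are components. A component $C$ is trivial if $C\Lambda C=\{v\}$ for a single vertex, non-trivial otherwise; positive if $\rho(A_i^C)>0$ for all $i$. $\overline V=\{w\in\Lambda^0:w\Lambda V\ne\emptyset\}$. For a matrix $B$ and $R,S\subseteq\Lambda^0$, $B^{R,S}$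 is the submatrix with rows $R$, columns $S$, $B^S=B^{S,S}$; $\rho$ is spectral radius. For a finite sequence $F=(a_1,\dots,a_m)$ in $\mathbb N^k\setminus\{0\}$ (repetitions allowed), $A_F=\sum_jA^{a_j}$; $F$ is well chosen if $A_F(v,w)>0$ iff $v\Lambda^lw\ne\emptyset$ for some $l\ne0$. A non-trivial component $C$ is $F$-harmonic if $\overline C\setminus C=\emptyset$ or $\rho(A_F^C)>\rho(A_F^{\overline C\setminus C})$. A positive harmonic component is a positive component that is $F$-harmonic for some well chosen $F$ (equivalently, for every well chosen $F$). *)

theory Defs
  imports "HOL-Analysis.Analysis"
begin

text \<open>A small category is given by its set of morphisms; objects are identified
with their identity morphisms. Degrees in N^k are functions nat => nat supported
in {..<k} (coordinate i corresponds to e_(i+1) of the paper).\<close>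

record 'a kgraph =
  paths :: "'a set"
  rng   :: "'a \<Rightarrow> 'a"
  src   :: "'a \<Rightarrow> 'a"
  cmp   :: "'a \<Rightarrow> 'a \<Rightarrow> 'a"
  deg   :: "'a \<Rightarrow> nat \<Rightarrow> nat"

definition in_Nk :: "nat \<Rightarrow> (nat \<Rightarrow> nat) \<Rightarrow> bool" where
  "in_Nk k n \<longleftrightarrow> (\<forall>i\<ge>k. n i = 0)"

definition unitvec :: "nat \<Rightarrow> nat \<Rightarrow> nat" where
  "unitvec i = (\<lambda>j. if j = i then 1 else 0)"

definition is_kgraph :: "nat \<Rightarrow> 'a kgraph \<Rightarrow> bool" where
  "is_kgraph k L \<longleftrightarrow>
     1 \<le> k \<and>
     countable (paths L) \<and>
     \<comment> \<open>category structure\<close>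
     (\<forall>l\<in>paths L. rng L l \<in> paths L \<and> src L l \<in> paths L) \<and>
     (\<forall>l\<in>paths L. rng L (rng L l) = rng L l \<and> src L (rng L l) = rng L l
                  \<and> rng L (src L l) = src L l \<and> src L (src L l) = src L l) \<and>
     (\<forall>l\<in>paths L. \<forall>m\<in>paths L. src L l = rng L m \<longrightarrow>
        cmp L l m \<in> paths L \<and> rng L (cmp L l m) = rng L l \<and> src L (cmp L l m) = src L m) \<and>
     (\<forall>l\<in>paths L. \<forall>m\<in>paths L. \<forall>n\<in>paths L. src L l = rng L m \<longrightarrow> src L m = rng L n \<longrightarrow>
        cmp L (cmp L l m) n = cmp L l (cmp L m n)) \<and>
     (\<forall>l\<in>paths L. cmp L (rng L l) l = l \<and> cmp L l (src L l) = l) \<and>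
     \<comment> \<open>degree functor into N^k\<close>
     (\<forall>l\<in>paths L. in_Nk k (deg L l)) \<and>
     (\<forall>l\<in>paths L. \<forall>m\<in>paths L. src L l = rng L m \<longrightarrow>
        deg L (cmp L l m) = (\<lambda>i. deg L l i + deg L m i)) \<and>
     \<comment> \<open>unique factorisation property\<close>
     (\<forall>l\<in>paths L. \<forall>m n. deg L l = (\<lambda>i. m i + n i) \<longrightarrow>
        (\<exists>!p. fst p \<in> paths L \<and> snd p \<in> paths L \<and> deg L (fst p) = m \<and> deg L (snd p) = n
              \<and> src L (fst p) = rng L (snd p) \<and> cmp L (fst p) (snd p) = l))"

definition vertices :: "'a kgraph \<Rightarrow> 'a set" where
  "vertices L = {v \<in> paths L. deg L v = (\<lambda>_. 0)}"

definition finite_kgraph :: "nat \<Rightarrow> 'a kgraph \<Rightarrow> bool" where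
  "finite_kgraph k L \<longleftrightarrow> (\<forall>n. finite {l \<in> paths L. deg L l = n})"

definition no_sources :: "nat \<Rightarrow> 'a kgraph \<Rightarrow> bool" where
  "no_sources k L \<longleftrightarrow>
     (\<forall>v\<in>vertices L. \<forall>n. in_Nk k n \<longrightarrow> (\<exists>l\<in>paths L. rng L l = v \<and> deg L l = n))"

text \<open>Matrices indexed by vertices are functions 'a => 'a => real; all products are
taken over the (finite) vertex set V.\<close>

definition mmult :: "'a set \<Rightarrow> ('a \<Rightarrow> 'a \<Rightarrow> real) \<Rightarrow> ('a \<Rightarrow> 'a \<Rightarrow> real) \<Rightarrow> ('a \<Rightarrow> 'a \<Rightarrow> real)" where
  "mmult V B C = (\<lambda>v w. \<Sum>u\<in>V. B v u * C u w)"

definition mident :: "'a \<Rightarrow> 'a \<Rightarrow> real" where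
  "mident = (\<lambda>v w. if v = w then 1 else 0)"

fun mpow :: "'a set \<Rightarrow> ('a \<Rightarrow> 'a \<Rightarrow> real) \<Rightarrow> nat \<Rightarrow> ('a \<Rightarrow> 'a \<Rightarrow> real)" where
  "mpow V B 0 = mident"
| "mpow V B (Suc m) = mmult V B (mpow V B m)"

definition vmat :: "'a kgraph \<Rightarrow> nat \<Rightarrow> 'a \<Rightarrow> 'a \<Rightarrow> real" where
  "vmat L i = (\<lambda>v w. real (card {l \<in> paths L. deg L l = unitvec i \<and> rng L l = v \<and> src L l = w}))"

definition vmat_pow :: "nat \<Rightarrow> 'a kgraph \<Rightarrow> (nat \<Rightarrow> nat) \<Rightarrow> 'a \<Rightarrow> 'a \<Rightarrow> real" where
  "vmat_pow k L n =
     foldr (\<lambda>i M. mmult (vertices L) (mpow (vertices L) (vmat L i) (n i)) M) [0..<k] mident"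

definition vmat_F :: "nat \<Rightarrow> 'a kgraph \<Rightarrow> (nat \<Rightarrow> nat) list \<Rightarrow> 'a \<Rightarrow> 'a \<Rightarrow> real" where
  "vmat_F k L F = (\<lambda>v w. \<Sum>j<length F. vmat_pow k L (F ! j) v w)"

definition spec_rad :: "'a set \<Rightarrow> ('a \<Rightarrow> 'a \<Rightarrow> real) \<Rightarrow> real" where
  "spec_rad S B = Max (insert 0 {cmod z | z. \<exists>x::'a \<Rightarrow> complex. (\<exists>u\<in>S. x u \<noteq> 0) \<and>
       (\<forall>v\<in>S. (\<Sum>w\<in>S. complex_of_real (B v w) * x w) = z * x v)})"

definition path_between :: "'a kgraph \<Rightarrow> 'a \<Rightarrow> 'a \<Rightarrow> bool" where
  "path_between L v w \<longleftrightarrow> (\<exists>l\<in>paths L. rng L l = v \<and> src L l = w)"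

definition vequiv :: "'a kgraph \<Rightarrow> 'a \<Rightarrow> 'a \<Rightarrow> bool" where
  "vequiv L v w \<longleftrightarrow> path_between L v w \<and> path_between L w v"

definition is_component :: "'a kgraph \<Rightarrow> 'a set \<Rightarrow> bool" where
  "is_component L C \<longleftrightarrow> (\<exists>v\<in>vertices L. C = {w \<in> vertices L. vequiv L v w})"

definition paths_between :: "'a kgraph \<Rightarrow> 'a set \<Rightarrow> 'a set \<Rightarrow> 'a set" where
  "paths_between L V W = {l \<in> paths L. rng L l \<in> V \<and> src L l \<in> W}"

definition trivial_comp :: "'a kgraph \<Rightarrow> 'a set \<Rightarrow> bool" where
  "trivial_comp L C \<longleftrightarrow> (\<exists>v. paths_between L C C = {v})"

definition positive_comp :: "nat \<Rightarrow> 'a kgraph \<Rightarrow> 'a set \<Rightarrow> bool" where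
  "positive_comp k L C \<longleftrightarrow> (\<forall>i<k. spec_rad C (vmat L i) > 0)"

definition closure_above :: "'a kgraph \<Rightarrow> 'a set \<Rightarrow> 'a set" where
  "closure_above L V = {w \<in> vertices L. paths_between L {w} V \<noteq> {}}"

definition well_chosen :: "nat \<Rightarrow> 'a kgraph \<Rightarrow> (nat \<Rightarrow> nat) list \<Rightarrow> bool" where
  "well_chosen k L F \<longleftrightarrow>
     (\<forall>a\<in>set F. in_Nk k a \<and> a \<noteq> (\<lambda>_. 0)) \<and>
     (\<forall>v\<in>vertices L. \<forall>w\<in>vertices L.
        vmat_F k L F v w > 0 \<longleftrightarrow>
        (\<exists>l\<in>paths L. deg L l \<noteq> (\<lambda>_. 0) \<and> rng L l = v \<and> src L l = w))"

definition F_harmonic :: "nat \<Rightarrow> 'a kgraph \<Rightarrow> (nat \<Rightarrow> nat) list \<Rightarrow> 'a set \<Rightarrow> bool" where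
  "F_harmonic k L F C \<longleftrightarrow> \<not> trivial_comp L C \<and>
     (closure_above L C - C = {} \<or>
      spec_rad C (vmat_F k L F) > spec_rad (closure_above L C - C) (vmat_F k L F))"

definition positive_harmonic :: "nat \<Rightarrow> 'a kgraph \<Rightarrow> 'a set \<Rightarrow> bool" where
  "positive_harmonic k L C \<longleftrightarrow> positive_comp k L C \<and>
     (\<exists>F. well_chosen k L F \<and> F_harmonic k L F C)"

end

theory Submission
  imports Defs "Jordan_Normal_Form.Spectral_Radius" "Jordan_Normal_Form.Determinant"
begin

no_notation Finite_Cartesian_Product.vec_nth (infixl "$" 90)



definition act :: "'a set \<Rightarrow> ('a \<Rightarrow> 'a \<Rightarrow> real) \<Rightarrow> ('a \<Rightarrow> real) \<Rightarrow> 'a \<Rightarrow> real" where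
  "act S B x u = (\<Sum>w\<in>S. B u w * x w)"

definition eigS :: "'a set \<Rightarrow> ('a \<Rightarrow> 'a \<Rightarrow> real) \<Rightarrow> complex \<Rightarrow> bool" where
  "eigS S B z \<longleftrightarrow> (\<exists>x::'a \<Rightarrow> complex. (\<exists>u\<in>S. x u \<noteq> 0) \<and>
       (\<forall>v\<in>S. (\<Sum>w\<in>S. complex_of_real (B v w) * x w) = z * x v))"

lemma spec_rad_eq: "spec_rad S B = Max (insert 0 (cmod ` {z. eigS S B z}))"
  unfolding spec_rad_def eigS_def by (rule arg_cong[where f=Max]) auto

definition enum :: "'a set \<Rightarrow> 'a list" where "enum S = (SOME xs. set xs = S \<and> distinct xs)"

lemma enum: assumes "finite S" shows "set (enum S) = S" "distinct (enum S)" "length (enum S) = card S"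
proof -
  have "set (enum S) = S \<and> distinct (enum S)"
    unfolding enum_def by (rule someI_ex) (use finite_distinct_list[OF assms] in auto)
  thus "set (enum S) = S" "distinct (enum S)" "length (enum S) = card S"
    using distinct_card[of "enum S"] by auto
qed

lemma enum_bij: assumes "finite S" shows "bij_betw ((!) (enum S)) {..<card S} S"
  by (rule bij_betw_nth) (auto simp: enum assms)

lemma sum_enum: assumes "finite S" shows "(\<Sum>w\<in>S. f w) = (\<Sum>j<card S. f (enum S ! j))"
  by (rule sum.reindex_bij_betw[OF enum_bij[OF assms], symmetric])

definition idx :: "'a set \<Rightarrow> 'a \<Rightarrow> nat" where
  "idx S u = inv_into {..<card S} ((!) (enum S)) u"

lemma idx: assumes "finite S" "u \<in> S" shows "idx S u < card S" "enum S ! idx S u = u"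
proof -
  have b: "bij_betw ((!) (enum S)) {..<card S} S" by (rule enum_bij[OF assms(1)])
  hence u: "u \<in> (!) (enum S) ` {..<card S}" using assms(2) by (simp add: bij_betw_def)
  show "idx S u < card S" unfolding idx_def using inv_into_into[OF u] by simp
  show "enum S ! idx S u = u" unfolding idx_def using f_inv_into_f[OF u] by simp
qed

lemma idx_enum: assumes "finite S" "i < card S" shows "idx S (enum S ! i) = i"
  using assms enum_bij[OF assms(1)] unfolding idx_def
  by (auto simp: bij_betw_def inv_into_f_f)

lemma enum_in: "finite S \<Longrightarrow> i < card S \<Longrightarrow> enum S ! i \<in> S"
  using enum nth_mem by (metis)

definition cmat :: "'a set \<Rightarrow> ('a \<Rightarrow> 'a \<Rightarrow> real) \<Rightarrow> complex mat" where
  "cmat S B = mat (card S) (card S) (\<lambda>(i,j). complex_of_real (B (enum S ! i) (enum S ! j)))"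

lemma cmat_carrier[simp]: "cmat S B \<in> carrier_mat (card S) (card S)"
  unfolding cmat_def by simp

lemma eig_iff: assumes S: "finite S" shows "eigS S B z \<longleftrightarrow> eigenvalue (cmat S B) z"
proof
  assume "eigS S B z"
  then obtain x where x0: "\<exists>u\<in>S. x u \<noteq> 0" and ev: "\<forall>v\<in>S. (\<Sum>w\<in>S. complex_of_real (B v w) * x w) = z * x v"
    unfolding eigS_def by blast
  define v where "v = vec (card S) (\<lambda>i. x (enum S ! i))"
  have "v \<noteq> 0\<^sub>v (card S)"
  proof
    assume h: "v = 0\<^sub>v (card S)"
    from x0 obtain u where u: "u \<in> S" "x u \<noteq> 0" by blast
    have "v $ idx S u = x u" using idx[OF S u(1)] unfolding v_def by simp
    with h idx[OF S u(1)] u show False by simp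
  qed
  moreover have "cmat S B *\<^sub>v v = z \<cdot>\<^sub>v v"
  proof (rule eq_vecI)
    fix i assume "i < dim_vec (z \<cdot>\<^sub>v v)"
    hence i: "i < card S" unfolding v_def by simp
    have "(cmat S B *\<^sub>v v) $ i = (\<Sum>j<card S. complex_of_real (B (enum S ! i) (enum S ! j)) * x (enum S ! j))"
      using i unfolding cmat_def v_def by (simp add: scalar_prod_def lessThan_atLeast0)
    also have "\<dots> = (\<Sum>w\<in>S. complex_of_real (B (enum S ! i) w) * x w)"
      by (rule sum_enum[OF S, symmetric])
    also have "\<dots> = z * x (enum S ! i)" using ev enum_in[OF S i] by blast
    finally show "(cmat S B *\<^sub>v v) $ i = (z \<cdot>\<^sub>v v) $ i" using i unfolding v_def by simp
  qed (simp add: cmat_def v_def)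
  moreover have "v \<in> carrier_vec (card S)" unfolding v_def by simp
  ultimately show "eigenvalue (cmat S B) z"
    unfolding eigenvalue_def eigenvector_def by (intro exI[of _ v]) (auto simp: cmat_def)
next
  assume "eigenvalue (cmat S B) z"
  then obtain v where vc: "v \<in> carrier_vec (card S)" and v0: "v \<noteq> 0\<^sub>v (card S)"
    and ev: "cmat S B *\<^sub>v v = z \<cdot>\<^sub>v v"
    unfolding eigenvalue_def eigenvector_def by (auto simp: cmat_def)
  define x where "x = (\<lambda>u. v $ idx S u)"
  have xe: "x (enum S ! j) = v $ j" if "j < card S" for j using idx_enum[OF S that] x_def by simp
  have "\<exists>u\<in>S. x u \<noteq> 0"
  proof -
    from v0 vc obtain i where i: "i < card S" "v $ i \<noteq> 0" by (auto simp: vec_eq_iff)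
    thus ?thesis using xe[OF i(1)] enum_in[OF S i(1)] by metis
  qed
  moreover have "(\<Sum>w\<in>S. complex_of_real (B u w) * x w) = z * x u" if u: "u \<in> S" for u
  proof -
    let ?i = "idx S u"
    have i: "?i < card S" "enum S ! ?i = u" using idx[OF S u] by auto
    have "(\<Sum>w\<in>S. complex_of_real (B u w) * x w) = (\<Sum>j<card S. complex_of_real (B u (enum S ! j)) * x (enum S ! j))"
      by (rule sum_enum[OF S])
    also have "\<dots> = (cmat S B *\<^sub>v v) $ ?i"
      using i vc unfolding cmat_def by (auto simp: scalar_prod_def lessThan_atLeast0 xe)
    also have "\<dots> = z * x u" using ev i vc x_def by simp
    finally show ?thesis .
  qed
  ultimately show "eigS S B z" unfolding eigS_def by blast
qed

lemma eig_finite: "finite S \<Longrightarrow> finite (cmod ` {z. eigS S B z})"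
proof -
  assume S: "finite S"
  have "{z. eigS S B z} = spectrum (cmat S B)"
    unfolding spectrum_def using eig_iff[OF S] by auto
  thus ?thesis using card_finite_spectrum(1)[OF cmat_carrier] by (metis finite_imageI)
qed

lemma spec_rad_ge: "finite S \<Longrightarrow> eigS S B z \<Longrightarrow> cmod z \<le> spec_rad S B"
  unfolding spec_rad_eq by (rule Max_ge) (auto simp: eig_finite)

lemma spec_rad_nonneg: "finite S \<Longrightarrow> 0 \<le> spec_rad S B"
  unfolding spec_rad_eq by (rule Max_ge) (auto simp: eig_finite)

lemma spec_rad_cases: assumes "finite S"
  shows "spec_rad S B = 0 \<or> (\<exists>z. eigS S B z \<and> cmod z = spec_rad S B)"
proof -
  have "spec_rad S B \<in> insert 0 (cmod ` {z. eigS S B z})"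
    unfolding spec_rad_eq by (rule Max_in) (auto simp: eig_finite assms)
  thus ?thesis by auto
qed

lemma spec_rad_le: assumes "finite S" "0 \<le> r" "\<And>z. eigS S B z \<Longrightarrow> cmod z \<le> r"
  shows "spec_rad S B \<le> r"
proof -
  from spec_rad_cases[OF assms(1), of B] show ?thesis
  proof
    assume "\<exists>z. eigS S B z \<and> cmod z = spec_rad S B"
    then obtain z where "eigS S B z" "cmod z = spec_rad S B" by blast
    thus ?thesis using assms(3)[of z] by simp
  qed (use assms in simp)
qed



lemma sum_delta_l: fixes c :: "'b::semiring_0" shows "finite S \<Longrightarrow> u \<in> S \<Longrightarrow> (\<Sum>w\<in>S. (if u = w then c else 0) * f w) = c * f u"
proof -
  assume a: "finite S" "u \<in> S"
  have "(\<Sum>w\<in>S. (if u = w then c else 0) * f w) = (\<Sum>w\<in>S. if u = w then c * f w else 0)"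
    by (rule sum.cong) auto
  also have "\<dots> = c * f u" using a by simp
  finally show ?thesis .
qed

lemma sum_delta_r: fixes c :: "'b::semiring_0" shows "finite S \<Longrightarrow> u \<in> S \<Longrightarrow> (\<Sum>w\<in>S. f w * (if w = u then c else 0)) = f u * c"
proof -
  assume a: "finite S" "u \<in> S"
  have "(\<Sum>w\<in>S. f w * (if w = u then c else 0)) = (\<Sum>w\<in>S. if u = w then f w * c else 0)"
    by (rule sum.cong) auto
  also have "\<dots> = f u * c" using a by simp
  finally show ?thesis .
qed

lemma act_mono: assumes "\<forall>w\<in>S. 0 \<le> B u w" "\<forall>w\<in>S. x w \<le> y w"
  shows "act S B x u \<le> act S B y u"
  unfolding act_def using assms by (intro sum_mono mult_left_mono) auto

lemma act_nonneg: assumes "\<forall>w\<in>S. 0 \<le> B u w" "\<forall>w\<in>S. 0 \<le> x w"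
  shows "0 \<le> act S B x u"
  unfolding act_def using assms by (intro sum_nonneg) auto

lemma act_scale: "act S B (\<lambda>w. c * x w) u = c * act S B x u"
  unfolding act_def by (simp add: sum_distrib_left algebra_simps)

lemma act_mmult: "act S (mmult S P Q) x u = act S P (act S Q x) u"
  unfolding act_def mmult_def
  by (simp add: sum_distrib_left sum_distrib_right mult.assoc) (rule sum.swap)

lemma act_mident: "u \<in> S \<Longrightarrow> finite S \<Longrightarrow> act S mident x u = x u"
  unfolding act_def mident_def by (simp add: sum_delta_l)

lemma mmult_assoc: "mmult S (mmult S A B) C = mmult S A (mmult S B C)"
  unfolding mmult_def
  by (rule ext, rule ext) (simp add: sum_distrib_left sum_distrib_right mult.assoc, rule sum.swap)

lemma spec_rad_empty: "spec_rad {} B = 0"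
  unfolding spec_rad_eq eigS_def by simp

lemma spec_rad_upper:
  assumes S: "finite S" "S \<noteq> {}" and B: "\<forall>u\<in>S. \<forall>w\<in>S. 0 \<le> B u w"
    and x: "\<forall>u\<in>S. 0 < x u" and le: "\<forall>u\<in>S. act S B x u \<le> r * x u"
  shows "spec_rad S B \<le> r"
proof -
  obtain u1 where u1: "u1 \<in> S" using S by auto
  have "0 \<le> act S B x u1" using B x u1 by (intro act_nonneg) auto
  hence "0 \<le> r * x u1" using le u1 by force
  moreover have "0 < x u1" using x u1 by blast
  ultimately have r0: "0 \<le> r" by (simp add: zero_le_mult_iff)
  show ?thesis
  proof (rule spec_rad_le[OF S(1) r0])
    fix z assume "eigS S B z"
    then obtain y where y0: "\<exists>u\<in>S. y u \<noteq> 0"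
      and ev: "\<forall>v\<in>S. (\<Sum>w\<in>S. complex_of_real (B v w) * y w) = z * y v"
      unfolding eigS_def by blast
    define f where "f u = cmod (y u) / x u" for u
    define m where "m = Max (f ` S)"
    have "m \<in> f ` S" unfolding m_def using S by (intro Max_in) auto
    then obtain u0 where u0: "u0 \<in> S" "f u0 = m" by auto
    have fm: "f u \<le> m" if "u \<in> S" for u unfolding m_def using S that by (intro Max_ge) auto
    have yle: "cmod (y w) \<le> m * x w" if "w \<in> S" for w
      using fm[OF that] x that unfolding f_def by (simp add: pos_divide_le_eq)
    have yu0: "cmod (y u0) = m * x u0" using u0 x unfolding f_def by auto
    have m0: "0 \<le> m" using u0 x unfolding f_def by auto
    have ypos: "0 < cmod (y u0)"
    proof (rule ccontr)
      assume "\<not> 0 < cmod (y u0)"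
      hence "cmod (y u0) = 0" by simp
      hence "m * x u0 = 0" using yu0 by simp
      moreover have "x u0 > 0" using x u0 by blast
      ultimately have "m = 0" by simp
      hence "y w = 0" if "w \<in> S" for w using yle[OF that] by simp
      with y0 show False by blast
    qed
    have "cmod z * cmod (y u0) = cmod (\<Sum>w\<in>S. complex_of_real (B u0 w) * y w)"
      using ev u0 by (simp add: norm_mult)
    also have "\<dots> \<le> (\<Sum>w\<in>S. cmod (complex_of_real (B u0 w) * y w))" by (rule norm_sum)
    also have "\<dots> = (\<Sum>w\<in>S. B u0 w * cmod (y w))"
      using B u0 by (intro sum.cong) (auto simp: norm_mult)
    also have "\<dots> \<le> (\<Sum>w\<in>S. B u0 w * (m * x w))"
      using B u0 yle by (intro sum_mono mult_left_mono) auto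
    also have "\<dots> = m * act S B x u0" unfolding act_def by (simp add: sum_distrib_left algebra_simps)
    also have "\<dots> \<le> m * (r * x u0)"
      using le u0 m0 by (intro mult_left_mono) auto
    also have "\<dots> = r * cmod (y u0)" using yu0 by simp
    finally show "cmod z \<le> r" using ypos by simp
  qed
qed

lemma spec_rad_zero: assumes "finite S" "\<forall>u\<in>S. \<forall>w\<in>S. B u w = 0"
  shows "spec_rad S B = 0"
proof (cases "S = {}")
  case True thus ?thesis by (simp add: spec_rad_empty)
next
  case False
  have "spec_rad S B \<le> 0"
    by (rule spec_rad_upper[where x="\<lambda>_. 1"]) (use assms False in \<open>auto simp: act_def\<close>)
  thus ?thesis using spec_rad_nonneg[OF assms(1), of B] by simp
qed

lemma eigS_scale: assumes "eigS S (\<lambda>u w. B u w / t) z" "t \<noteq> 0"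
  shows "eigS S B (z * t)"
proof -
  from assms obtain y where y0: "\<exists>u\<in>S. y u \<noteq> 0"
    and ev: "\<forall>v\<in>S. (\<Sum>w\<in>S. complex_of_real (B v w / t) * y w) = z * y v"
    unfolding eigS_def by blast
  have "(\<Sum>w\<in>S. complex_of_real (B v w) * y w) = z * t * y v" if "v \<in> S" for v
  proof -
    have "(\<Sum>w\<in>S. complex_of_real (B v w) * y w)
        = complex_of_real t * (\<Sum>w\<in>S. complex_of_real (B v w / t) * y w)"
      using assms(2) by (simp add: sum_distrib_left field_simps)
    also have "\<dots> = z * t * y v" using ev that by simp
    finally show ?thesis .
  qed
  with y0 show ?thesis unfolding eigS_def by blast
qed

lemma cmat_cong: "\<forall>u\<in>S. \<forall>w\<in>S. P u w = Q u w \<Longrightarrow> finite S \<Longrightarrow> cmat S P = cmat S Q"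
  unfolding cmat_def by (intro eq_matI) (auto simp: enum_in)

lemma cmat_mmult: assumes S: "finite S" shows "cmat S (mmult S P Q) = cmat S P * cmat S Q"
proof (rule eq_matI)
  fix i j assume "i < dim_row (cmat S P * cmat S Q)" "j < dim_col (cmat S P * cmat S Q)"
  hence ij: "i < card S" "j < card S" by (auto simp: cmat_def)
  have "(cmat S P * cmat S Q) $$ (i,j) = (\<Sum>l<card S. complex_of_real (P (enum S ! i) (enum S ! l)) *
          complex_of_real (Q (enum S ! l) (enum S ! j)))"
    using ij by (simp add: cmat_def scalar_prod_def lessThan_atLeast0)
  also have "\<dots> = complex_of_real (\<Sum>m\<in>S. P (enum S ! i) m * Q m (enum S ! j))"
    unfolding sum_enum[OF S] by simp
  finally show "cmat S (mmult S P Q) $$ (i, j) = (cmat S P * cmat S Q) $$ (i, j)"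
    using ij by (simp add: cmat_def mmult_def)
qed (auto simp: cmat_def)

lemma cmat_mident: assumes S: "finite S" shows "cmat S mident = 1\<^sub>m (card S)"
proof (rule eq_matI)
  fix i j assume "i < dim_row (1\<^sub>m (card S) :: complex mat)" "j < dim_col (1\<^sub>m (card S) :: complex mat)"
  hence ij: "i < card S" "j < card S" by auto
  have "(enum S ! i = enum S ! j) = (i = j)" using enum[OF S] ij by (simp add: nth_eq_iff_index_eq)
  thus "cmat S mident $$ (i, j) = 1\<^sub>m (card S) $$ (i, j)" using ij by (simp add: cmat_def mident_def)
qed (auto simp: cmat_def)

lemma mpow_Suc': assumes S: "finite S"
  shows "\<forall>u\<in>S. \<forall>w\<in>S. mmult S (mpow S B k) B u w = mpow S B (Suc k) u w"
proof (induction k)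
  case 0
  show ?case using S by (simp add: mmult_def mident_def sum_delta_l sum_delta_r)
next
  case (Suc k)
  show ?case
  proof (intro ballI)
    fix u w assume uw: "u \<in> S" "w \<in> S"
    have "mmult S (mpow S B (Suc k)) B u w = mmult S B (mmult S (mpow S B k) B) u w"
      by (simp add: mmult_assoc)
    also have "\<dots> = (\<Sum>m\<in>S. B u m * mmult S (mpow S B k) B m w)"
      unfolding mmult_def[of S B "mmult S (mpow S B k) B"] ..
    also have "\<dots> = (\<Sum>m\<in>S. B u m * mpow S B (Suc k) m w)"
      using Suc uw by (intro sum.cong) auto
    also have "\<dots> = mmult S B (mpow S B (Suc k)) u w"
      unfolding mmult_def[of S B "mpow S B (Suc k)"] ..
    finally show "mmult S (mpow S B (Suc k)) B u w = mpow S B (Suc (Suc k)) u w" by simp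
  qed
qed

lemma cmat_mpow: assumes S: "finite S" shows "cmat S (mpow S B k) = cmat S B ^\<^sub>m k"
proof (induction k)
  case 0 thus ?case using cmat_mident[OF S] by (simp add: cmat_def)
next
  case (Suc k)
  have "cmat S (mpow S B (Suc k)) = cmat S (mmult S (mpow S B k) B)"
    using mpow_Suc'[OF S] S by (intro cmat_cong) auto
  also have "\<dots> = cmat S B ^\<^sub>m k * cmat S B" using Suc cmat_mmult[OF S] by simp
  finally show ?case by simp
qed

lemma mpow_nonneg: assumes "\<forall>u\<in>S. \<forall>w\<in>S. 0 \<le> B u w"
  shows "\<forall>u\<in>S. \<forall>w\<in>S. 0 \<le> mpow S B k u w"
  using assms by (induction k) (auto simp: mident_def mmult_def intro!: sum_nonneg)

lemma spec_rad_lower: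
  assumes S: "finite S" and B: "\<forall>u\<in>S. \<forall>w\<in>S. 0 \<le> B u w"
    and x: "\<forall>u\<in>S. 0 \<le> x u" and u0: "u0 \<in> S" "0 < x u0"
    and ge: "\<forall>u\<in>S. t * x u \<le> act S B x u"
  shows "t \<le> spec_rad S B"
proof (rule ccontr)
  let ?r = "spec_rad S B"
  assume "\<not> t \<le> ?r"
  hence rt: "?r < t" by simp
  have r0: "0 \<le> ?r" by (rule spec_rad_nonneg[OF S])
  define t' where "t' = (?r + t) / 2"
  have t': "?r < t'" "t' < t" "0 < t'" using rt r0 unfolding t'_def by auto
  define B' where "B' = (\<lambda>u w. B u w / t')"
  have cS: "0 < card S" using S u0 card_gt_0_iff by blast
  have sr: "spectral_radius (cmat S B') < 1"
  proof -
    have fin: "finite (norm ` spectrum (cmat S B'))"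
      using card_finite_spectrum(1)[OF cmat_carrier] by blast
    have ne: "norm ` spectrum (cmat S B') \<noteq> {}"
      using spectrum_non_empty[OF cmat_carrier cS] by blast
    have "\<forall>a\<in>norm ` spectrum (cmat S B'). a < 1"
    proof
      fix a assume "a \<in> norm ` spectrum (cmat S B')"
      then obtain l where l: "l \<in> spectrum (cmat S B')" "a = cmod l" by auto
      have "eigS S B' l" using l(1) eig_iff[OF S] unfolding spectrum_def by auto
      hence "eigS S B (l * t')" using eigS_scale[of S B t' l] t' unfolding B'_def by auto
      hence "cmod (l * complex_of_real t') \<le> ?r" using spec_rad_ge[OF S] by simp
      hence "cmod l * t' \<le> ?r" using t' by (simp add: norm_mult)
      hence "cmod l * t' < t'" using t' by linarith
      have "cmod l < 1"
      proof (rule ccontr)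
        assume "\<not> cmod l < 1"
        hence "1 * t' \<le> cmod l * t'" using t' by (intro mult_right_mono) auto
        thus False using \<open>cmod l * t' < t'\<close> by simp
      qed
      thus "a < 1" using l by simp
    qed
    thus ?thesis unfolding spectral_radius_def using fin ne by (simp add: Max_less_iff)
  qed
  obtain c where c: "\<forall>k. norm_bound (cmat S B' ^\<^sub>m k) c"
    using spectral_radius_jnf_norm_bound_less_1_upper_triangular[OF cmat_carrier sr] by blast
  have B'0: "\<forall>u\<in>S. \<forall>w\<in>S. 0 \<le> B' u w" using B t' unfolding B'_def by auto
  have ent: "mpow S B' k u w \<le> c" if "u \<in> S" "w \<in> S" for k u w
  proof -
    have i: "idx S u < card S" "enum S ! idx S u = u" using idx[OF S that(1)] by auto
    have j: "idx S w < card S" "enum S ! idx S w = w" using idx[OF S that(2)] by auto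
    have "(cmat S B' ^\<^sub>m k) $$ (idx S u, idx S w) = complex_of_real (mpow S B' k u w)"
      using i j unfolding cmat_mpow[OF S, symmetric] by (simp add: cmat_def)
    moreover have "norm ((cmat S B' ^\<^sub>m k) $$ (idx S u, idx S w)) \<le> c"
      using c i j unfolding norm_bound_def by (simp add: cmat_def)
    ultimately show ?thesis by simp
  qed
  have grow: "\<forall>u\<in>S. (t/t')^k * x u \<le> act S (mpow S B' k) x u" for k
  proof (induction k)
    case 0 thus ?case using S by (simp add: act_mident)
  next
    case (Suc k)
    show ?case
    proof
      fix u assume u: "u \<in> S"
      have "(t/t')^Suc k * x u = (t/t')^k * ((t * x u) / t')" by simp
      also have "\<dots> \<le> (t/t')^k * (act S B x u / t')"
        using ge u t' by (intro mult_left_mono divide_right_mono) auto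
      also have "act S B x u / t' = act S B' x u"
        unfolding act_def B'_def by (simp add: sum_divide_distrib)
      also have "(t/t')^k * act S B' x u = act S B' (\<lambda>w. (t/t')^k * x w) u"
        by (simp add: act_scale)
      also have "\<dots> \<le> act S B' (act S (mpow S B' k) x) u"
        using Suc B'0 u by (intro act_mono) auto
      also have "\<dots> = act S (mpow S B' (Suc k)) x u" by (simp add: act_mmult)
      finally show "(t/t')^Suc k * x u \<le> act S (mpow S B' (Suc k)) x u" .
    qed
  qed
  define X where "X = (\<Sum>w\<in>S. x w)"
  have bnd: "(t/t')^k \<le> c * X / x u0" for k
  proof -
    have "(t/t')^k * x u0 \<le> act S (mpow S B' k) x u0" using grow u0 by blast
    also have "\<dots> \<le> (\<Sum>w\<in>S. c * x w)"
      unfolding act_def using ent u0 x by (intro sum_mono mult_right_mono) auto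
    also have "\<dots> = c * X" unfolding X_def by (simp add: sum_distrib_left)
    finally show ?thesis using u0 by (simp add: pos_le_divide_eq)
  qed
  have "1 < t/t'" using t' by simp
  from real_arch_pow[OF this, of "c * X / x u0"] obtain k where "c * X / x u0 < (t/t')^k" by blast
  with bnd[of k] show False by simp
qed

lemma solve:
  assumes S: "finite S" and rho: "spec_rad S X < \<Phi>"
  shows "\<exists>u. \<forall>v\<in>S. \<Phi> * u v - act S X u v = b v"
proof -
  let ?n = "card S"
  define N where "N = mat ?n ?n (\<lambda>(i,j). (if i = j then complex_of_real \<Phi> else 0)
                        - complex_of_real (X (enum S ! i) (enum S ! j)))"
  have Nc: "N \<in> carrier_mat ?n ?n" unfolding N_def by simp
  have Nv: "(N *\<^sub>v v) $ i = complex_of_real \<Phi> * v $ i - (cmat S X *\<^sub>v v) $ i"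
    if "v \<in> carrier_vec ?n" "i < ?n" for v i
  proof -
    have "(N *\<^sub>v v) $ i = (\<Sum>j<?n. ((if i = j then complex_of_real \<Phi> else 0)
                        - complex_of_real (X (enum S ! i) (enum S ! j))) * v $ j)"
      using that unfolding N_def by (simp add: scalar_prod_def lessThan_atLeast0)
    also have "\<dots> = (\<Sum>j<?n. (if i = j then complex_of_real \<Phi> else 0) * v $ j)
                 - (\<Sum>j<?n. complex_of_real (X (enum S ! i) (enum S ! j)) * v $ j)"
      by (simp add: algebra_simps sum_subtractf)
    also have "(\<Sum>j<?n. (if i = j then complex_of_real \<Phi> else 0) * v $ j) = complex_of_real \<Phi> * v $ i"
      using that sum_delta_l[of "{..<?n}" i "complex_of_real \<Phi>" "\<lambda>j. v $ j"] by simp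
    also have "(\<Sum>j<?n. complex_of_real (X (enum S ! i) (enum S ! j)) * v $ j) = (cmat S X *\<^sub>v v) $ i"
      using that by (simp add: cmat_def scalar_prod_def lessThan_atLeast0)
    finally show ?thesis .
  qed
  have dN: "det N \<noteq> 0"
  proof
    assume "det N = 0"
    then obtain v where v: "v \<in> carrier_vec ?n" "v \<noteq> 0\<^sub>v ?n" "N *\<^sub>v v = 0\<^sub>v ?n"
      using det_0_iff_vec_prod_zero_field[OF Nc] by blast
    have "cmat S X *\<^sub>v v = complex_of_real \<Phi> \<cdot>\<^sub>v v"
    proof (rule eq_vecI)
      fix i assume "i < dim_vec (complex_of_real \<Phi> \<cdot>\<^sub>v v)"
      hence i: "i < ?n" using v by simp
      have "(N *\<^sub>v v) $ i = 0" using v(3) i by simp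
      thus "(cmat S X *\<^sub>v v) $ i = (complex_of_real \<Phi> \<cdot>\<^sub>v v) $ i" using Nv[OF v(1) i] i v by simp
    qed (use v in \<open>simp add: cmat_def\<close>)
    hence "eigenvalue (cmat S X) (complex_of_real \<Phi>)"
      unfolding eigenvalue_def eigenvector_def using v by (intro exI[of _ v]) (auto simp: cmat_def)
    hence "eigS S X (complex_of_real \<Phi>)" using eig_iff[OF S] by simp
    hence "cmod (complex_of_real \<Phi>) \<le> spec_rad S X" by (rule spec_rad_ge[OF S])
    thus False using rho spec_rad_nonneg[OF S, of X] by simp
  qed
  from det_non_zero_imp_unit[OF Nc dN, of "()"]
  obtain M where M: "M \<in> carrier_mat ?n ?n" "N * M = 1\<^sub>m ?n"
    unfolding Units_def ring_mat_def by auto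
  define bv where "bv = vec ?n (\<lambda>i. complex_of_real (b (enum S ! i)))"
  define w where "w = M *\<^sub>v bv"
  have wc: "w \<in> carrier_vec ?n" unfolding w_def by (rule mult_mat_vec_carrier[OF M(1)]) (simp add: bv_def)
  have Nw: "N *\<^sub>v w = bv"
  proof -
    have "N *\<^sub>v w = (N * M) *\<^sub>v bv" unfolding w_def using assoc_mult_mat_vec[OF Nc M(1), of bv] by (simp add: bv_def)
    also have "\<dots> = bv" using M by (simp add: bv_def)
    finally show ?thesis .
  qed
  define u where "u v = Re (w $ idx S v)" for v
  have ue: "u (enum S ! j) = Re (w $ j)" if "j < ?n" for j using idx_enum[OF S that] u_def by simp
  show ?thesis
  proof (intro exI ballI)
    fix v assume v: "v \<in> S"
    let ?i = "idx S v"
    have i: "?i < ?n" "enum S ! ?i = v" using idx[OF S v] by auto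
    have "(N *\<^sub>v w) $ ?i = complex_of_real (b v)" using Nw i by (simp add: bv_def)
    hence "Re (complex_of_real \<Phi> * w $ ?i - (cmat S X *\<^sub>v w) $ ?i) = b v" using Nv[OF wc i(1)] by simp
    moreover have "Re ((cmat S X *\<^sub>v w) $ ?i) = act S X u v"
    proof -
      have "(cmat S X *\<^sub>v w) $ ?i = (\<Sum>j<?n. complex_of_real (X v (enum S ! j)) * w $ j)"
        using i wc by (simp add: cmat_def scalar_prod_def lessThan_atLeast0)
      hence "Re ((cmat S X *\<^sub>v w) $ ?i) = (\<Sum>j<?n. X v (enum S ! j) * u (enum S ! j))"
        by (simp add: ue)
      also have "\<dots> = act S X u v" unfolding act_def by (rule sum_enum[OF S, symmetric])
      finally show ?thesis .
    qed
    ultimately show "\<Phi> * u v - act S X u v = b v" using u_def by simp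
  qed
qed


lemma act_diff: "act S B (\<lambda>w. f w - g w) u = act S B f u - act S B g u"
  unfolding act_def by (simp add: algebra_simps sum_subtractf)

lemma act_cong: "\<forall>w\<in>S. f w = g w \<Longrightarrow> act S B f u = act S B g u"
  unfolding act_def by (intro sum.cong) auto

lemma eigS_real: assumes "\<exists>u\<in>S. x u \<noteq> 0" "\<forall>v\<in>S. act S B x v = c * x v"
  shows "eigS S B (complex_of_real c)"
  unfolding eigS_def
proof (intro exI[of _ "\<lambda>u. complex_of_real (x u)"] conjI ballI)
  show "\<exists>u\<in>S. complex_of_real (x u) \<noteq> 0" using assms(1) by simp
  fix v assume "v \<in> S"
  hence "complex_of_real (act S B x v) = complex_of_real (c * x v)" using assms(2) by simp
  thus "(\<Sum>w\<in>S. complex_of_real (B v w) * complex_of_real (x w)) = complex_of_real c * complex_of_real (x v)"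
    unfolding act_def by simp
qed

lemma act_pos: assumes S: "finite S" and P: "\<forall>u\<in>S. \<forall>w\<in>S. 0 < P u w"
  and x: "\<forall>u\<in>S. 0 \<le> x u" and w0: "w0 \<in> S" "0 < x w0" and u: "u \<in> S"
  shows "0 < act S P x u"
  unfolding act_def
proof (rule sum_pos2[OF S w0(1)])
  show "0 < P u w0 * x w0" using P w0 u by simp
  show "\<And>i. i \<in> S \<Longrightarrow> 0 \<le> P u i * x i"
  proof -
    fix i assume "i \<in> S"
    hence "0 \<le> P u i" "0 \<le> x i" using P x u by (auto intro: less_imp_le)
    thus "0 \<le> P u i * x i" by simp
  qed
qed

lemma common_eig:
  assumes S: "finite S" "S \<noteq> {}"
    and P: "\<forall>u\<in>S. \<forall>w\<in>S. 0 < P u w"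
    and M: "\<forall>i\<in>I. \<forall>u\<in>S. \<forall>w\<in>S. 0 \<le> M i u w"
    and comm: "\<forall>i\<in>I. \<forall>y. \<forall>u\<in>S. act S P (act S (M i) y) u = act S (M i) (act S P y) u"
  shows "\<exists>x. (\<forall>u\<in>S. 0 < x u) \<and> (\<forall>u\<in>S. act S P x u = spec_rad S P * x u)
           \<and> (\<forall>i\<in>I. \<forall>u\<in>S. act S (M i) x u = spec_rad S (M i) * x u)
           \<and> (\<forall>y. (\<forall>u\<in>S. act S P y u = spec_rad S P * y u) \<longrightarrow> (\<exists>c. \<forall>u\<in>S. y u = c * x u))"
proof -
  let ?r = "spec_rad S P"
  have P0: "\<forall>u\<in>S. \<forall>w\<in>S. 0 \<le> P u w" using P by (auto intro: less_imp_le)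
  obtain u0 where u0: "u0 \<in> S" using S by auto
  define p where "p = Min ((\<lambda>(u,w). P u w) ` (S \<times> S))"
  have p: "p \<le> P u w" if "u \<in> S" "w \<in> S" for u w
    unfolding p_def using S that by (intro Min_le) auto
  have p0: "0 < p"
  proof -
    have "p \<in> (\<lambda>(u,w). P u w) ` (S \<times> S)" unfolding p_def using S by (intro Min_in) auto
    thus ?thesis using P by auto
  qed
  have "p \<le> ?r"
  proof (rule spec_rad_lower[OF S(1) P0, of "\<lambda>_. 1" u0])
    show "\<forall>u\<in>S. p * 1 \<le> act S P (\<lambda>_. 1) u"
    proof
      fix u assume u: "u \<in> S"
      have "p \<le> P u u" using p u by blast
      also have "\<dots> \<le> (\<Sum>w\<in>S. P u w)" using S u P0 by (intro member_le_sum) auto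
      finally show "p * 1 \<le> act S P (\<lambda>_. 1) u" unfolding act_def by simp
    qed
  qed (use u0 in auto)
  hence r0: "0 < ?r" using p0 by simp
  obtain z where z: "eigS S P z" "cmod z = ?r" using spec_rad_cases[OF S(1), of P] r0 by auto
  then obtain y where y0: "\<exists>u\<in>S. y u \<noteq> 0"
      and ev: "\<forall>v\<in>S. (\<Sum>w\<in>S. complex_of_real (P v w) * y w) = z * y v"
    unfolding eigS_def by blast
  define x where "x u = cmod (y u)" for u
  have x0: "\<forall>u\<in>S. 0 \<le> x u" unfolding x_def by simp
  obtain w0 where w0: "w0 \<in> S" "0 < x w0" using y0 unfolding x_def by auto
  have sub: "?r * x u \<le> act S P x u" if u: "u \<in> S" for u
  proof -
    have "?r * x u = cmod (\<Sum>w\<in>S. complex_of_real (P u w) * y w)"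
      using ev u z(2) unfolding x_def by (simp add: norm_mult)
    also have "\<dots> \<le> (\<Sum>w\<in>S. cmod (complex_of_real (P u w) * y w))" by (rule norm_sum)
    also have "\<dots> = act S P x u" unfolding act_def x_def
      using P0 u by (intro sum.cong) (auto simp: norm_mult)
    finally show ?thesis .
  qed
  have eq: "\<forall>u\<in>S. act S P x u = ?r * x u"
  proof (rule ccontr)
    assume "\<not> ?thesis"
    then obtain u1 where u1: "u1 \<in> S" "act S P x u1 \<noteq> ?r * x u1" by blast
    define d where "d u = act S P x u - ?r * x u" for u
    have d0: "\<forall>u\<in>S. 0 \<le> d u" using sub unfolding d_def by auto
    have d1: "0 < d u1" using sub[OF u1(1)] u1 unfolding d_def by auto
    define x1 where "x1 = act S P x"
    have x1p: "0 < x1 u" if "u \<in> S" for u unfolding x1_def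
      by (rule act_pos[OF S(1) P x0 w0 that])
    have gap: "?r * x1 u < act S P x1 u" if u: "u \<in> S" for u
    proof -
      have "act S P x1 u - ?r * x1 u = act S P (\<lambda>w. act S P x w) u - act S P (\<lambda>w. ?r * x w) u"
        unfolding x1_def by (simp add: act_scale)
      also have "\<dots> = act S P d u" unfolding d_def by (simp add: act_diff)
      also have "\<dots> > 0" by (rule act_pos[OF S(1) P d0 u1(1) d1 u])
      finally show ?thesis by simp
    qed
    define q where "q u = act S P x1 u / x1 u" for u
    define e where "e = Min (q ` S)"
    have "e \<in> q ` S" unfolding e_def using S by (intro Min_in) auto
    then obtain u2 where u2: "u2 \<in> S" "e = q u2" by auto
    have er: "?r < e" using gap[OF u2(1)] x1p[OF u2(1)] u2 unfolding q_def by (simp add: pos_less_divide_eq)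
    have "e \<le> ?r"
    proof (rule spec_rad_lower[OF S(1) P0, of x1 u2])
      show "\<forall>u\<in>S. 0 \<le> x1 u" using x1p by (auto intro: less_imp_le)
      show "0 < x1 u2" by (rule x1p[OF u2(1)])
      show "\<forall>u\<in>S. e * x1 u \<le> act S P x1 u"
      proof
        fix u assume u: "u \<in> S"
        have "e \<le> q u" unfolding e_def using S u by (intro Min_le) auto
        thus "e * x1 u \<le> act S P x1 u" using x1p[OF u] unfolding q_def by (simp add: pos_le_divide_eq)
      qed
    qed (rule u2(1))
    with er show False by simp
  qed
  have xp: "\<forall>u\<in>S. 0 < x u"
  proof
    fix u assume u: "u \<in> S"
    have "0 < act S P x u" by (rule act_pos[OF S(1) P x0 w0 u])
    thus "0 < x u" using eq u r0 by (simp add: zero_less_mult_iff)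
  qed
  have uniq: "\<exists>c. \<forall>u\<in>S. y u = c * x u" if yev: "\<forall>u\<in>S. act S P y u = ?r * y u" for y
  proof -
    define f where "f u = y u / x u" for u
    define c where "c = Max (f ` S)"
    have "c \<in> f ` S" unfolding c_def using S by (intro Max_in) auto
    then obtain u2 where u2: "u2 \<in> S" "c = f u2" by auto
    have fc: "f u \<le> c" if "u \<in> S" for u unfolding c_def using S that by (intro Max_ge) auto
    define w where "w u = c * x u - y u" for u
    have w0': "\<forall>u\<in>S. 0 \<le> w u"
      using fc xp unfolding w_def f_def by (auto simp: pos_divide_le_eq)
    have wu2: "w u2 = 0" using u2 xp unfolding w_def f_def by auto
    have wev: "act S P w u = ?r * w u" if "u \<in> S" for u
    proof -
      have "act S P w u = act S P (\<lambda>v. c * x v) u - act S P y u" unfolding w_def by (simp add: act_diff)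
      also have "\<dots> = c * (?r * x u) - ?r * y u" using eq yev that by (simp add: act_scale)
      finally show ?thesis unfolding w_def by (simp add: algebra_simps)
    qed
    have "\<forall>u\<in>S. w u = 0"
    proof (rule ccontr)
      assume "\<not> ?thesis"
      then obtain u3 where u3: "u3 \<in> S" "w u3 \<noteq> 0" by blast
      hence "0 < w u3" using w0' by force
      hence "0 < act S P w u2" by (rule act_pos[OF S(1) P w0' u3(1) _ u2(1)])
      thus False using wev[OF u2(1)] wu2 by simp
    qed
    thus ?thesis unfolding w_def by (intro exI[of _ c]) auto
  qed
  have Mx: "act S (M i) x u = spec_rad S (M i) * x u" if i: "i \<in> I" and u: "u \<in> S" for i u
  proof -
    define yi where "yi = act S (M i) x"
    have "\<forall>u\<in>S. act S P yi u = ?r * yi u"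
    proof
      fix u assume u: "u \<in> S"
      have "act S P yi u = act S (M i) (act S P x) u" unfolding yi_def using comm i u by blast
      also have "\<dots> = act S (M i) (\<lambda>w. ?r * x w) u" using eq by (intro act_cong) auto
      also have "\<dots> = ?r * yi u" unfolding yi_def by (simp add: act_scale)
      finally show "act S P yi u = ?r * yi u" .
    qed
    then obtain c where c: "\<forall>u\<in>S. yi u = c * x u" using uniq by blast
    have c0: "0 \<le> c"
    proof -
      have "0 \<le> yi u0" unfolding yi_def using M i u0 xp by (intro act_nonneg) (auto intro: less_imp_le)
      thus ?thesis using c u0 xp by (auto simp: zero_le_mult_iff)
    qed
    have "spec_rad S (M i) \<le> c"
      by (rule spec_rad_upper[OF S _ xp]) (use M i c yi_def in auto)
    moreover have "c \<le> spec_rad S (M i)"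
    proof -
      have "eigS S (M i) (complex_of_real c)"
      proof (rule eigS_real)
        show "\<exists>u\<in>S. x u \<noteq> 0" using xp u0 by (metis less_irrefl)
      qed (use c yi_def in auto)
      from spec_rad_ge[OF S(1) this] show ?thesis using c0 by simp
    qed
    ultimately have "c = spec_rad S (M i)" by simp
    thus ?thesis using c u yi_def by simp
  qed
  show ?thesis using xp eq Mx uniq by blast
qed


definition Rnz :: "'a kgraph \<Rightarrow> 'a \<Rightarrow> 'a \<Rightarrow> bool" where
  "Rnz L v w \<longleftrightarrow> (\<exists>l\<in>paths L. deg L l \<noteq> (\<lambda>_. 0) \<and> rng L l = v \<and> src L l = w)"

locale kg =
  fixes k :: nat and L :: "'a kgraph"
  assumes kg: "is_kgraph k L" and fin: "finite_kgraph k L"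
begin

abbreviation "P \<equiv> paths L"
abbreviation "V \<equiv> vertices L"
abbreviation "lq \<equiv> path_between L"

lemma kgs: "1 \<le> k \<and> countable P \<and> (\<forall>l\<in>P. rng L l \<in> P \<and> src L l \<in> P) \<and>
     (\<forall>l\<in>P. rng L (rng L l) = rng L l \<and> src L (rng L l) = rng L l
                  \<and> rng L (src L l) = src L l \<and> src L (src L l) = src L l) \<and>
     (\<forall>l\<in>P. \<forall>m\<in>P. src L l = rng L m \<longrightarrow>
        cmp L l m \<in> P \<and> rng L (cmp L l m) = rng L l \<and> src L (cmp L l m) = src L m) \<and>
     (\<forall>l\<in>P. \<forall>m\<in>P. \<forall>n\<in>P. src L l = rng L m \<longrightarrow> src L m = rng L n \<longrightarrow>
        cmp L (cmp L l m) n = cmp L l (cmp L m n)) \<and>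
     (\<forall>l\<in>P. cmp L (rng L l) l = l \<and> cmp L l (src L l) = l) \<and>
     (\<forall>l\<in>P. in_Nk k (deg L l)) \<and>
     (\<forall>l\<in>P. \<forall>m\<in>P. src L l = rng L m \<longrightarrow>
        deg L (cmp L l m) = (\<lambda>i. deg L l i + deg L m i)) \<and>
     (\<forall>l\<in>P. \<forall>m n. deg L l = (\<lambda>i. m i + n i) \<longrightarrow>
        (\<exists>!p. fst p \<in> P \<and> snd p \<in> P \<and> deg L (fst p) = m \<and> deg L (snd p) = n
              \<and> src L (fst p) = rng L (snd p) \<and> cmp L (fst p) (snd p) = l))"
  using kg unfolding is_kgraph_def .

lemma k1: "1 \<le> k" using kgs by (rule conjunct1)
lemma rs_in: "l \<in> P \<Longrightarrow> rng L l \<in> P \<and> src L l \<in> P"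
  using kgs[THEN conjunct2, THEN conjunct2, THEN conjunct1] by (rule bspec)
lemma idem: "l \<in> P \<Longrightarrow> rng L (rng L l) = rng L l \<and> src L (rng L l) = rng L l
                  \<and> rng L (src L l) = src L l \<and> src L (src L l) = src L l"
  using kgs[THEN conjunct2, THEN conjunct2, THEN conjunct2, THEN conjunct1] by (rule bspec)
lemma cmp_in: "l \<in> P \<Longrightarrow> m \<in> P \<Longrightarrow> src L l = rng L m \<Longrightarrow>
        cmp L l m \<in> P \<and> rng L (cmp L l m) = rng L l \<and> src L (cmp L l m) = src L m"
  using kgs[THEN conjunct2, THEN conjunct2, THEN conjunct2, THEN conjunct2, THEN conjunct1] by blast
lemma units: "l \<in> P \<Longrightarrow> cmp L (rng L l) l = l \<and> cmp L l (src L l) = l"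
  using kgs[THEN conjunct2, THEN conjunct2, THEN conjunct2, THEN conjunct2, THEN conjunct2, THEN conjunct2, THEN conjunct1] by (rule bspec)
lemma deg_in: "l \<in> P \<Longrightarrow> in_Nk k (deg L l)"
  using kgs[THEN conjunct2, THEN conjunct2, THEN conjunct2, THEN conjunct2, THEN conjunct2, THEN conjunct2, THEN conjunct2, THEN conjunct1] by (rule bspec)
lemma deg_cmp: "l \<in> P \<Longrightarrow> m \<in> P \<Longrightarrow> src L l = rng L m \<Longrightarrow>
        deg L (cmp L l m) = (\<lambda>i. deg L l i + deg L m i)"
  using kgs[THEN conjunct2, THEN conjunct2, THEN conjunct2, THEN conjunct2, THEN conjunct2, THEN conjunct2, THEN conjunct2, THEN conjunct2, THEN conjunct1] by blast
lemma ufp: "l \<in> P \<Longrightarrow> deg L l = (\<lambda>i. m i + n i) \<Longrightarrow>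
        (\<exists>!p. fst p \<in> P \<and> snd p \<in> P \<and> deg L (fst p) = m \<and> deg L (snd p) = n
              \<and> src L (fst p) = rng L (snd p) \<and> cmp L (fst p) (snd p) = l)"
  using kgs[THEN conjunct2, THEN conjunct2, THEN conjunct2, THEN conjunct2, THEN conjunct2, THEN conjunct2, THEN conjunct2, THEN conjunct2, THEN conjunct2] by blast

lemma deg_rng: assumes "l \<in> P" shows "deg L (rng L l) = (\<lambda>_. 0)"
proof -
  have r: "rng L l \<in> P" "src L (rng L l) = rng L l" using rs_in[OF assms] idem[OF assms] by auto
  have "deg L l = (\<lambda>i. deg L (rng L l) i + deg L l i)"
    using deg_cmp[OF r(1) assms] r(2) units[OF assms] by simp
  hence "deg L l i = deg L (rng L l) i + deg L l i" for i by (rule fun_cong)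
  thus ?thesis by auto
qed

lemma deg_src: assumes "l \<in> P" shows "deg L (src L l) = (\<lambda>_. 0)"
proof -
  have r: "src L l \<in> P" "rng L (src L l) = src L l" using rs_in[OF assms] idem[OF assms] by auto
  have "deg L l = (\<lambda>i. deg L l i + deg L (src L l) i)"
    using deg_cmp[OF assms r(1)] r(2) units[OF assms] by simp
  hence "deg L l i = deg L l i + deg L (src L l) i" for i by (rule fun_cong)
  thus ?thesis by auto
qed

lemma rng_V: "l \<in> P \<Longrightarrow> rng L l \<in> V" using rs_in deg_rng unfolding vertices_def by auto
lemma src_V: "l \<in> P \<Longrightarrow> src L l \<in> V" using rs_in deg_src unfolding vertices_def by auto

lemma vert: assumes "v \<in> V" shows "v \<in> P" "rng L v = v" "src L v = v" "deg L v = (\<lambda>_. 0)"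
proof -
  show vP: "v \<in> P" and d: "deg L v = (\<lambda>_. 0)" using assms unfolding vertices_def by auto
  have dd: "deg L v = (\<lambda>i. (\<lambda>_. 0::nat) i + (\<lambda>_. 0::nat) i)" using d by simp
  define Q where "Q p \<longleftrightarrow> fst p \<in> P \<and> snd p \<in> P \<and> deg L (fst p) = (\<lambda>_. 0)
     \<and> deg L (snd p) = (\<lambda>_. 0) \<and> src L (fst p) = rng L (snd p) \<and> cmp L (fst p) (snd p) = v" for p
  have u: "\<exists>!p. Q p" unfolding Q_def by (rule ufp[OF vP dd])
  have p1: "Q (rng L v, v)" unfolding Q_def
    using vP rs_in[OF vP] deg_rng[OF vP] d idem[OF vP] units[OF vP] by auto
  have p2: "Q (v, src L v)" unfolding Q_def
    using vP rs_in[OF vP] deg_src[OF vP] d idem[OF vP] units[OF vP] by auto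
  obtain p where "\<And>y. Q y \<Longrightarrow> y = p" using ex1E[OF u] by metis
  hence "(rng L v, v) = p" "(v, src L v) = p" using p1 p2 by blast+
  hence "(rng L v, v) = (v, src L v)" by simp
  thus "rng L v = v" "src L v = v" by auto
qed

lemma deg0_vert: "l \<in> P \<Longrightarrow> deg L l = (\<lambda>_. 0) \<Longrightarrow> l \<in> V"
  unfolding vertices_def by auto

lemma finV: "finite V"
proof -
  have "finite {l \<in> P. deg L l = (\<lambda>_. 0)}" using fin unfolding finite_kgraph_def by blast
  thus ?thesis unfolding vertices_def by simp
qed

lemma le_V: "lq u w \<Longrightarrow> u \<in> V \<and> w \<in> V"
  unfolding path_between_def using rng_V src_V by auto

lemma le_refl: "v \<in> V \<Longrightarrow> lq v v"
  unfolding path_between_def using vert[of v] by auto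

lemma le_trans: assumes "lq u m" "lq m w" shows "lq u w"
proof -
  obtain l1 where l1: "l1 \<in> P" "rng L l1 = u" "src L l1 = m" using assms(1) unfolding path_between_def by auto
  obtain l2 where l2: "l2 \<in> P" "rng L l2 = m" "src L l2 = w" using assms(2) unfolding path_between_def by auto
  have "src L l1 = rng L l2" using l1 l2 by simp
  thus ?thesis unfolding path_between_def using cmp_in[OF l1(1) l2(1)] l1 l2 by auto
qed

lemma Rnz_le: "Rnz L u w \<Longrightarrow> lq u w" unfolding Rnz_def path_between_def by auto

lemma Rnz_neq: assumes "lq u w" "u \<noteq> w" shows "Rnz L u w"
proof -
  obtain l where l: "l \<in> P" "rng L l = u" "src L l = w" using assms(1) unfolding path_between_def by auto
  have "deg L l \<noteq> (\<lambda>_. 0)"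
  proof
    assume "deg L l = (\<lambda>_. 0)"
    hence "l \<in> V" by (rule deg0_vert[OF l(1)])
    thus False using vert[of l] l assms(2) by auto
  qed
  thus ?thesis unfolding Rnz_def using l by blast
qed

lemma Rnz_trans1: assumes "Rnz L u m" "lq m w" shows "Rnz L u w"
proof -
  obtain l1 where l1: "l1 \<in> P" "rng L l1 = u" "src L l1 = m" "deg L l1 \<noteq> (\<lambda>_. 0)"
    using assms(1) unfolding Rnz_def by auto
  obtain l2 where l2: "l2 \<in> P" "rng L l2 = m" "src L l2 = w" using assms(2) unfolding path_between_def by auto
  have c: "src L l1 = rng L l2" using l1 l2 by simp
  have "deg L (cmp L l1 l2) \<noteq> (\<lambda>_. 0)"
  proof
    assume "deg L (cmp L l1 l2) = (\<lambda>_. 0)"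
    hence "deg L l1 i + deg L l2 i = 0" for i using deg_cmp[OF l1(1) l2(1) c] fun_cong by fastforce
    hence "deg L l1 i = 0" for i by simp
    thus False using l1(4) by auto
  qed
  thus ?thesis unfolding Rnz_def using cmp_in[OF l1(1) l2(1) c] l1 l2 by auto
qed

lemma Rnz_trans2: assumes "lq u m" "Rnz L m w" shows "Rnz L u w"
proof -
  obtain l1 where l1: "l1 \<in> P" "rng L l1 = u" "src L l1 = m" using assms(1) unfolding path_between_def by auto
  obtain l2 where l2: "l2 \<in> P" "rng L l2 = m" "src L l2 = w" "deg L l2 \<noteq> (\<lambda>_. 0)"
    using assms(2) unfolding Rnz_def by auto
  have c: "src L l1 = rng L l2" using l1 l2 by simp
  have "deg L (cmp L l1 l2) \<noteq> (\<lambda>_. 0)"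
  proof
    assume "deg L (cmp L l1 l2) = (\<lambda>_. 0)"
    hence "deg L l1 i + deg L l2 i = 0" for i using deg_cmp[OF l1(1) l2(1) c] fun_cong by fastforce
    hence "deg L l2 i = 0" for i by simp
    thus False using l2(4) by auto
  qed
  thus ?thesis unfolding Rnz_def using cmp_in[OF l1(1) l2(1) c] l1 l2 by auto
qed

end


definition respV :: "'a kgraph \<Rightarrow> ('a \<Rightarrow> 'a \<Rightarrow> real) \<Rightarrow> bool" where
  "respV L B \<longleftrightarrow> (\<forall>u\<in>vertices L. \<forall>w\<in>vertices L. B u w \<noteq> 0 \<longrightarrow> path_between L u w)"

definition nn :: "('a \<Rightarrow> 'a \<Rightarrow> real) \<Rightarrow> bool" where
  "nn B \<longleftrightarrow> (\<forall>u w. 0 \<le> B u w)"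

definition comm :: "'a set \<Rightarrow> ('a \<Rightarrow> 'a \<Rightarrow> real) \<Rightarrow> ('a \<Rightarrow> 'a \<Rightarrow> real) \<Rightarrow> bool" where
  "comm V B C \<longleftrightarrow> (\<forall>u\<in>V. \<forall>w\<in>V. mmult V B C u w = mmult V C B u w)"

lemma mmult_cong: "(\<forall>m\<in>V. X u m = X' u m) \<Longrightarrow> (\<forall>m\<in>V. Y m w = Y' m w) \<Longrightarrow> mmult V X Y u w = mmult V X' Y' u w"
  unfolding mmult_def by (intro sum.cong) auto

lemma mmult_mident_r: "finite V \<Longrightarrow> w \<in> V \<Longrightarrow> mmult V B mident u w = B u w"
  unfolding mmult_def mident_def using sum_delta_r[of V w "\<lambda>m. B u m" 1] by simp

lemma mmult_mident_l: "finite V \<Longrightarrow> u \<in> V \<Longrightarrow> mmult V mident B u w = B u w"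
  unfolding mmult_def mident_def using sum_delta_l[of V u 1 "\<lambda>m. B m w"] by simp

lemma nn_mident: "nn mident" unfolding nn_def mident_def by auto
lemma nn_mmult: "nn B \<Longrightarrow> nn C \<Longrightarrow> nn (mmult V B C)"
  unfolding nn_def mmult_def by (auto intro!: sum_nonneg)
lemma nn_mpow: "nn B \<Longrightarrow> nn (mpow V B n)"
  by (induction n) (auto simp: nn_mident nn_mmult)

lemma comm_mident: "finite V \<Longrightarrow> comm V B mident"
  unfolding comm_def using mmult_mident_l mmult_mident_r by metis

lemma comm_mmult: assumes "comm V B C1" "comm V B C2" shows "comm V B (mmult V C1 C2)"
  unfolding comm_def
proof (intro ballI)
  fix u w assume uw: "u \<in> V" "w \<in> V"
  have "mmult V B (mmult V C1 C2) u w = mmult V (mmult V B C1) C2 u w" by (simp add: mmult_assoc)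
  also have "\<dots> = mmult V (mmult V C1 B) C2 u w"
    using assms(1) uw unfolding comm_def by (intro mmult_cong) auto
  also have "\<dots> = mmult V C1 (mmult V B C2) u w" by (simp add: mmult_assoc)
  also have "\<dots> = mmult V C1 (mmult V C2 B) u w"
    using assms(2) uw unfolding comm_def by (intro mmult_cong) auto
  also have "\<dots> = mmult V (mmult V C1 C2) B u w" by (simp add: mmult_assoc)
  finally show "mmult V B (mmult V C1 C2) u w = mmult V (mmult V C1 C2) B u w" .
qed

lemma comm_mpow: "finite V \<Longrightarrow> comm V B C \<Longrightarrow> comm V B (mpow V C n)"
  by (induction n) (auto simp: comm_mident comm_mmult)

lemma comm_fold: "finite V \<Longrightarrow> (\<forall>i\<in>set xs. comm V B (C i)) \<Longrightarrow>
    comm V B (foldr (\<lambda>i M. mmult V (mpow V (C i) (a i)) M) xs mident)"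
  by (induction xs) (auto simp: comm_mident comm_mmult comm_mpow)

lemma mmult_sum_r: "mmult V B (\<lambda>u w. \<Sum>j\<in>J. C j u w) u w = (\<Sum>j\<in>J. mmult V B (C j) u w)"
  unfolding mmult_def by (simp add: sum_distrib_left) (rule sum.swap)

lemma mmult_sum_l: "mmult V (\<lambda>u w. \<Sum>j\<in>J. C j u w) B u w = (\<Sum>j\<in>J. mmult V (C j) B u w)"
  unfolding mmult_def by (simp add: sum_distrib_right) (rule sum.swap)

lemma comm_sum: "\<forall>j\<in>J. comm V B (C j) \<Longrightarrow> comm V B (\<lambda>u w. \<Sum>j\<in>J. C j u w)"
  unfolding comm_def by (simp add: mmult_sum_r mmult_sum_l)

lemma act_mat_cong: "(\<forall>w\<in>S. B u w = B' u w) \<Longrightarrow> act S B x u = act S B' x u"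
  unfolding act_def by (intro sum.cong) auto

lemma act_sum: "finite J \<Longrightarrow> act S (\<lambda>u w. \<Sum>j\<in>J. C j u w) x u = (\<Sum>j\<in>J. act S (C j) x u)"
  unfolding act_def by (simp add: sum_distrib_right) (rule sum.swap)

context kg
begin

lemma comp_elim: "is_component L C \<Longrightarrow> \<exists>v\<in>V. C = {w\<in>V. vequiv L v w}"
  unfolding is_component_def by blast

lemma comp_sub: "is_component L C \<Longrightarrow> C \<subseteq> V"
  unfolding is_component_def by blast

lemma comp_of: "v \<in> V \<Longrightarrow> is_component L {w\<in>V. vequiv L v w} \<and> v \<in> {w\<in>V. vequiv L v w}"
  unfolding is_component_def vequiv_def using le_refl by blast

lemma comp_ne: "is_component L C \<Longrightarrow> C \<noteq> {}"
  unfolding is_component_def vequiv_def using le_refl by blast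

lemma comp_lq: assumes "is_component L C" "u \<in> C" "w \<in> C" shows "lq u w"
proof -
  obtain v where v: "v \<in> V" "C = {w\<in>V. vequiv L v w}" using comp_elim[OF assms(1)] by blast
  have "lq u v" "lq v w" using assms(2,3) v unfolding vequiv_def by auto
  thus ?thesis using le_trans by blast
qed

lemma comp_convex: assumes "is_component L C" "u \<in> C" "w \<in> C" "lq u m" "lq m w" shows "m \<in> C"
proof -
  obtain v where v: "v \<in> V" "C = {w\<in>V. vequiv L v w}" using comp_elim[OF assms(1)] by blast
  have "lq v u" "lq w v" using assms(2,3) v unfolding vequiv_def by auto
  hence "lq v m" "lq m v" using assms(4,5) le_trans by blast+
  moreover have "m \<in> V" using le_V assms(4) by blast
  ultimately show ?thesis using v unfolding vequiv_def by auto
qed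

lemma comp_closed: assumes "is_component L C" "u \<in> C" "w \<in> V" "lq u w" "lq w u" shows "w \<in> C"
  using comp_convex[OF assms(1,2,2)] assms le_trans by blast

lemma cl_iff: "w \<in> closure_above L C \<longleftrightarrow> w \<in> V \<and> (\<exists>c\<in>C. lq w c)"
  unfolding closure_above_def paths_between_def path_between_def by auto

lemma vert_pb: "v \<in> V \<Longrightarrow> v \<in> C \<Longrightarrow> v \<in> paths_between L C C"
  unfolding paths_between_def using vert by auto

lemma nontriv_R: assumes C: "is_component L C" and nt: "\<not> trivial_comp L C" and u: "u \<in> C" and w: "w \<in> C"
  shows "Rnz L u w"
proof -
  have CV: "C \<subseteq> V" by (rule comp_sub[OF C])
  obtain a b where ab: "a \<in> C" "b \<in> C" "Rnz L a b"
  proof -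
    have uin: "u \<in> paths_between L C C" using vert_pb u CV by blast
    have "paths_between L C C \<noteq> {u}" using nt unfolding trivial_comp_def by blast
    then obtain l where l: "l \<in> paths_between L C C" "l \<noteq> u" using uin by blast
    hence lP: "l \<in> P" "rng L l \<in> C" "src L l \<in> C" unfolding paths_between_def by auto
    show ?thesis
    proof (cases "deg L l = (\<lambda>_. 0)")
      case True
      hence lV: "l \<in> V" by (rule deg0_vert[OF lP(1)])
      hence lC: "l \<in> C" using lP vert by auto
      have "Rnz L u l" by (rule Rnz_neq[OF comp_lq[OF C u lC]]) (use l in auto)
      thus ?thesis using that u lC by blast
    next
      case False
      hence "Rnz L (rng L l) (src L l)" unfolding Rnz_def using lP by blast
      thus ?thesis using that lP by blast
    qed
  qed
  have "Rnz L u b" using Rnz_trans2[OF comp_lq[OF C u ab(1)] ab(3)] .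
  thus ?thesis using Rnz_trans1 comp_lq[OF C ab(2) w] by blast
qed

lemma triv_noR: assumes C: "is_component L C" and t: "trivial_comp L C" and u: "u \<in> C" and w: "w \<in> C"
  shows "\<not> Rnz L u w"
proof
  assume "Rnz L u w"
  then obtain l where l: "l \<in> P" "deg L l \<noteq> (\<lambda>_. 0)" "rng L l = u" "src L l = w"
    unfolding Rnz_def by blast
  obtain p where p: "paths_between L C C = {p}" using t unfolding trivial_comp_def by blast
  have "u \<in> paths_between L C C" using vert_pb u comp_sub[OF C] by blast
  moreover have "l \<in> paths_between L C C" using l u w unfolding paths_between_def by auto
  ultimately have "l = u" using p by auto
  thus False using l(2) vert[of u] u comp_sub[OF C] by auto
qed

lemma vmat_nonneg: "0 \<le> vmat L i u w" unfolding vmat_def by simp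
lemma nn_vmat: "nn (vmat L i)" unfolding nn_def by (simp add: vmat_nonneg)

lemma vmat_edge: "vmat L i u w \<noteq> 0 \<Longrightarrow> \<exists>l\<in>P. deg L l = unitvec i \<and> rng L l = u \<and> src L l = w"
  unfolding vmat_def by (metis (mono_tags, lifting) card.empty empty_Collect_eq of_nat_0)

lemma vmat_pos: assumes "l \<in> P" "deg L l = unitvec i" shows "0 < vmat L i (rng L l) (src L l)"
proof -
  have "finite {l \<in> P. deg L l = unitvec i}" using fin unfolding finite_kgraph_def by blast
  hence f: "finite {l' \<in> P. deg L l' = unitvec i \<and> rng L l' = rng L l \<and> src L l' = src L l}"
    by (rule finite_subset[rotated]) auto
  have "l \<in> {l' \<in> P. deg L l' = unitvec i \<and> rng L l' = rng L l \<and> src L l' = src L l}" using assms by auto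
  hence "card {l' \<in> P. deg L l' = unitvec i \<and> rng L l' = rng L l \<and> src L l' = src L l} > 0"
    using f card_gt_0_iff by blast
  thus ?thesis unfolding vmat_def by simp
qed

lemma unitvec_nz: "unitvec i \<noteq> (\<lambda>_. 0)"
  unfolding unitvec_def by (metis zero_neq_one)

lemma vmat_lq: "vmat L i u w \<noteq> 0 \<Longrightarrow> lq u w"
  using vmat_edge unfolding path_between_def by blast

lemma respV_vmat: "respV L (vmat L i)"
  unfolding respV_def using vmat_lq by blast

lemma respV_mident: "respV L mident"
  unfolding respV_def mident_def using le_refl by auto

lemma respV_mmult: assumes "respV L B1" "respV L B2" shows "respV L (mmult V B1 B2)"
  unfolding respV_def
proof (intro ballI impI)
  fix u w assume uw: "u \<in> V" "w \<in> V" and ne: "mmult V B1 B2 u w \<noteq> 0"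
  then obtain m where m: "m \<in> V" "B1 u m * B2 m w \<noteq> 0"
    unfolding mmult_def by (meson sum.not_neutral_contains_not_neutral)
  hence "lq u m" "lq m w" using assms uw unfolding respV_def by auto
  thus "lq u w" using le_trans by blast
qed

lemma respV_mpow: "respV L B \<Longrightarrow> respV L (mpow V B n)"
  by (induction n) (auto simp: respV_mident respV_mmult)

lemma respV_fold: "respV L (foldr (\<lambda>i M. mmult V (mpow V (vmat L i) (a i)) M) xs mident)"
  by (induction xs) (auto simp: respV_mident respV_mmult respV_mpow respV_vmat)

lemma respV_vmat_pow: "respV L (vmat_pow k L a)"
  unfolding vmat_pow_def by (rule respV_fold)

lemma respV_sum: assumes "\<forall>j\<in>J. respV L (C j)" shows "respV L (\<lambda>u w. \<Sum>j\<in>J. C j u w)"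
  unfolding respV_def
proof (intro ballI impI)
  fix u w assume uw: "u \<in> V" "w \<in> V" and ne: "(\<Sum>j\<in>J. C j u w) \<noteq> 0"
  then obtain j where "j \<in> J" "C j u w \<noteq> 0" by (meson sum.not_neutral_contains_not_neutral)
  thus "lq u w" using assms uw unfolding respV_def by auto
qed

lemma respV_vmat_F: "respV L (vmat_F k L F)"
  unfolding vmat_F_def by (rule respV_sum) (simp add: respV_vmat_pow)

lemma nn_fold: "nn (foldr (\<lambda>i M. mmult V (mpow V (vmat L i) (a i)) M) xs mident)"
  by (induction xs) (auto simp: nn_mident nn_mmult nn_mpow nn_vmat)

lemma nn_vmat_pow: "nn (vmat_pow k L a)" unfolding vmat_pow_def by (rule nn_fold)

lemma nn_vmat_F: "nn (vmat_F k L F)"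
  unfolding vmat_F_def nn_def using nn_vmat_pow unfolding nn_def by (auto intro!: sum_nonneg)

definition convex :: "'a set \<Rightarrow> bool" where
  "convex D \<longleftrightarrow> D \<subseteq> V \<and> (\<forall>u\<in>D. \<forall>w\<in>D. \<forall>m. lq u m \<longrightarrow> lq m w \<longrightarrow> m \<in> D)"

lemma convex_comp: "is_component L C \<Longrightarrow> convex C"
  unfolding convex_def using comp_sub comp_convex by blast

lemma act_restrict: assumes D: "convex D" and B1: "respV L B1" and B2: "respV L B2" and u: "u \<in> D"
  shows "act D (mmult V B1 B2) x u = act D B1 (act D B2 x) u"
proof -
  have DV: "D \<subseteq> V" using D unfolding convex_def by blast
  have "act D (mmult V B1 B2) x u = (\<Sum>m\<in>V. B1 u m * act D B2 x m)"
    unfolding act_def mmult_def by (simp add: sum_distrib_left sum_distrib_right mult.assoc) (rule sum.swap)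
  also have "\<dots> = (\<Sum>m\<in>D. B1 u m * act D B2 x m)"
  proof (rule sum.mono_neutral_right[OF finV DV], intro ballI)
    fix m assume m: "m \<in> V - D"
    show "B1 u m * act D B2 x m = 0"
    proof (cases "B1 u m = 0")
      case False
      hence um: "lq u m" using B1 u m DV unfolding respV_def by blast
      have "act D B2 x m = 0" unfolding act_def
      proof (rule sum.neutral, intro ballI)
        fix w assume w: "w \<in> D"
        have "B2 m w = 0"
        proof (rule ccontr)
          assume "B2 m w \<noteq> 0"
          hence "lq m w" using B2 m w DV unfolding respV_def by blast
          hence "m \<in> D" using D um u w unfolding convex_def by blast
          thus False using m by blast
        qed
        thus "B2 m w * x w = 0" by simp
      qed
      thus ?thesis by simp
    qed simp
  qed
  also have "\<dots> = act D B1 (act D B2 x) u" unfolding act_def ..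
  finally show ?thesis .
qed

end


context kg
begin

abbreviation "A \<equiv> vmat L"

definition E :: "(nat \<Rightarrow> nat) \<Rightarrow> 'a \<Rightarrow> 'a \<Rightarrow> 'a set" where
  "E a u w = {p \<in> P. deg L p = a \<and> rng L p = u \<and> src L p = w}"

lemma E_fin: "finite (E a u w)"
proof -
  have "finite {l \<in> P. deg L l = a}" using fin unfolding finite_kgraph_def by blast
  thus ?thesis unfolding E_def by (rule finite_subset[rotated]) auto
qed

lemma vmat_E: "A i u w = real (card (E (unitvec i) u w))"
  unfolding vmat_def E_def by simp

lemma pair_card: assumes u: "u \<in> V" and w: "w \<in> V"
  shows "(\<Sum>m\<in>V. card (E a u m) * card (E b m w)) = card (E (\<lambda>x. a x + b x) u w)"
proof -
  define Pr where "Pr = {(\<mu>,\<nu>). \<mu> \<in> P \<and> \<nu> \<in> P \<and> deg L \<mu> = a \<and> deg L \<nu> = b \<and> rng L \<mu> = u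
                      \<and> src L \<mu> = rng L \<nu> \<and> src L \<nu> = w}"
  have Pr_eq: "Pr = (\<Union>m\<in>V. E a u m \<times> E b m w)"
  proof
    show "Pr \<subseteq> (\<Union>m\<in>V. E a u m \<times> E b m w)"
    proof
      fix q assume "q \<in> Pr"
      then obtain \<mu> \<nu> where q: "q = (\<mu>,\<nu>)" "\<mu> \<in> P" "\<nu> \<in> P" "deg L \<mu> = a" "deg L \<nu> = b" "rng L \<mu> = u"
        "src L \<mu> = rng L \<nu>" "src L \<nu> = w" unfolding Pr_def by auto
      have "src L \<mu> \<in> V" using src_V q by blast
      thus "q \<in> (\<Union>m\<in>V. E a u m \<times> E b m w)" using q unfolding E_def by auto
    qed
    show "(\<Union>m\<in>V. E a u m \<times> E b m w) \<subseteq> Pr" unfolding Pr_def E_def by auto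
  qed
  have "card Pr = (\<Sum>m\<in>V. card (E a u m \<times> E b m w))"
    unfolding Pr_eq
  proof (rule card_UN_disjoint[OF finV])
    show "\<forall>m\<in>V. finite (E a u m \<times> E b m w)" by (simp add: E_fin finite_cartesian_product)
  qed (auto simp: E_def)
  also have "\<dots> = (\<Sum>m\<in>V. card (E a u m) * card (E b m w))" by (simp add: card_cartesian_product)
  finally have c1: "card Pr = (\<Sum>m\<in>V. card (E a u m) * card (E b m w))" .
  have "bij_betw (\<lambda>(\<mu>,\<nu>). cmp L \<mu> \<nu>) Pr (E (\<lambda>x. a x + b x) u w)"
  proof (rule bij_betwI')
    fix p q assume p: "p \<in> Pr" and q: "q \<in> Pr"
    obtain \<mu> \<nu> where pp: "p = (\<mu>,\<nu>)" "\<mu> \<in> P" "\<nu> \<in> P" "deg L \<mu> = a" "deg L \<nu> = b"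
        "src L \<mu> = rng L \<nu>" using p unfolding Pr_def by auto
    obtain \<mu>' \<nu>' where qq: "q = (\<mu>',\<nu>')" "\<mu>' \<in> P" "\<nu>' \<in> P" "deg L \<mu>' = a" "deg L \<nu>' = b"
        "src L \<mu>' = rng L \<nu>'" using q unfolding Pr_def by auto
    show "((\<lambda>(\<mu>,\<nu>). cmp L \<mu> \<nu>) p = (\<lambda>(\<mu>,\<nu>). cmp L \<mu> \<nu>) q) = (p = q)"
    proof
      assume eq: "(\<lambda>(\<mu>,\<nu>). cmp L \<mu> \<nu>) p = (\<lambda>(\<mu>,\<nu>). cmp L \<mu> \<nu>) q"
      let ?l = "cmp L \<mu> \<nu>"
      have lP: "?l \<in> P" using cmp_in[OF pp(2,3,6)] by blast
      have dl: "deg L ?l = (\<lambda>i. a i + b i)" using deg_cmp[OF pp(2,3,6)] pp by simp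
      have "\<exists>!p. fst p \<in> P \<and> snd p \<in> P \<and> deg L (fst p) = a \<and> deg L (snd p) = b
              \<and> src L (fst p) = rng L (snd p) \<and> cmp L (fst p) (snd p) = ?l" by (rule ufp[OF lP dl])
      moreover have "cmp L \<mu>' \<nu>' = ?l" using eq pp qq by simp
      ultimately show "p = q" using pp qq by (metis fst_conv snd_conv)
    qed simp
  next
    fix p assume "p \<in> Pr"
    then obtain \<mu> \<nu> where pp: "p = (\<mu>,\<nu>)" "\<mu> \<in> P" "\<nu> \<in> P" "deg L \<mu> = a" "deg L \<nu> = b" "rng L \<mu> = u"
        "src L \<mu> = rng L \<nu>" "src L \<nu> = w" unfolding Pr_def by auto
    show "(\<lambda>(\<mu>,\<nu>). cmp L \<mu> \<nu>) p \<in> E (\<lambda>x. a x + b x) u w"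
      using cmp_in[OF pp(2,3,7)] deg_cmp[OF pp(2,3,7)] pp unfolding E_def by simp
  next
    fix l assume "l \<in> E (\<lambda>x. a x + b x) u w"
    hence l: "l \<in> P" "deg L l = (\<lambda>x. a x + b x)" "rng L l = u" "src L l = w" unfolding E_def by auto
    obtain p where p: "fst p \<in> P" "snd p \<in> P" "deg L (fst p) = a" "deg L (snd p) = b"
        "src L (fst p) = rng L (snd p)" "cmp L (fst p) (snd p) = l"
      using ufp[OF l(1,2)] by blast
    have "rng L (fst p) = u" "src L (snd p) = w" using cmp_in[OF p(1,2,5)] p(6) l by auto
    hence "p \<in> Pr" using p unfolding Pr_def by (cases p) auto
    moreover have "l = (\<lambda>(\<mu>,\<nu>). cmp L \<mu> \<nu>) p" using p(6) by (cases p) auto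
    ultimately show "\<exists>p\<in>Pr. l = (\<lambda>(\<mu>,\<nu>). cmp L \<mu> \<nu>) p" by blast
  qed
  hence "card Pr = card (E (\<lambda>x. a x + b x) u w)" by (rule bij_betw_same_card)
  with c1 show ?thesis by simp
qed

lemma comm_vmat: "comm V (A i) (A j)"
  unfolding comm_def
proof (intro ballI)
  fix u w assume u: "u \<in> V" and w: "w \<in> V"
  have "mmult V (A i) (A j) u w = real (\<Sum>m\<in>V. card (E (unitvec i) u m) * card (E (unitvec j) m w))"
    unfolding mmult_def vmat_E by simp
  also have "\<dots> = real (card (E (\<lambda>x. unitvec i x + unitvec j x) u w))" using pair_card[OF u w] by simp
  also have "(\<lambda>x. unitvec i x + unitvec j x) = (\<lambda>x. unitvec j x + unitvec i x)" by (simp add: add.commute)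
  also have "real (card (E \<dots> u w)) = real (\<Sum>m\<in>V. card (E (unitvec j) u m) * card (E (unitvec i) m w))"
    using pair_card[OF u w] by simp
  also have "\<dots> = mmult V (A j) (A i) u w" unfolding mmult_def vmat_E by simp
  finally show "mmult V (A i) (A j) u w = mmult V (A j) (A i) u w" .
qed

abbreviation fp :: "nat list \<Rightarrow> (nat \<Rightarrow> nat) \<Rightarrow> 'a \<Rightarrow> 'a \<Rightarrow> real" where
  "fp xs a \<equiv> foldr (\<lambda>i M. mmult V (mpow V (A i) (a i)) M) xs mident"

lemma fp_cong: "(\<forall>i\<in>set xs. a i = b i) \<Longrightarrow> fp xs a = fp xs b"
  by (induction xs) auto

lemma fp_zero: "\<forall>u\<in>V. \<forall>w\<in>V. fp xs (\<lambda>_. 0) u w = mident u w"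
  by (induction xs) (auto simp: mmult_mident_l finV)

lemma fp_step: assumes "c \<in> set xs" "distinct xs"
  shows "\<forall>u\<in>V. \<forall>w\<in>V. fp xs (a(c := Suc (a c))) u w = mmult V (A c) (fp xs a) u w"
  using assms
proof (induction xs)
  case Nil thus ?case by simp
next
  case (Cons i xs)
  show ?case
  proof (cases "i = c")
    case True
    hence cx: "c \<notin> set xs" using Cons by auto
    have "fp xs (a(c := Suc (a c))) = fp xs a" using cx by (intro fp_cong) auto
    thus ?thesis using True by (simp add: mmult_assoc)
  next
    case False
    hence cx: "c \<in> set xs" "distinct xs" using Cons by auto
    note IH = Cons.IH[OF cx]
    show ?thesis
    proof (intro ballI)
      fix u w assume uw: "u \<in> V" "w \<in> V"
      have "fp (i # xs) (a(c := Suc (a c))) u w = mmult V (mpow V (A i) (a i)) (fp xs (a(c := Suc (a c)))) u w"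
        using False by simp
      also have "\<dots> = mmult V (mpow V (A i) (a i)) (mmult V (A c) (fp xs a)) u w"
        using IH uw by (intro mmult_cong) auto
      also have "\<dots> = mmult V (mmult V (mpow V (A i) (a i)) (A c)) (fp xs a) u w"
        by (simp add: mmult_assoc)
      also have "\<dots> = mmult V (mmult V (A c) (mpow V (A i) (a i))) (fp xs a) u w"
        using comm_mpow[OF finV comm_vmat[of c i], of "a i"] uw unfolding comm_def
        by (intro mmult_cong) auto
      also have "\<dots> = mmult V (A c) (fp (i # xs) a) u w" by (simp add: mmult_assoc)
      finally show "fp (i # xs) (a(c := Suc (a c))) u w = mmult V (A c) (fp (i # xs) a) u w" .
    qed
  qed
qed

lemma vp_zero: "u \<in> V \<Longrightarrow> w \<in> V \<Longrightarrow> vmat_pow k L (\<lambda>_. 0) u w = mident u w"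
  unfolding vmat_pow_def using fp_zero by blast

lemma vp_step: "c < k \<Longrightarrow> u \<in> V \<Longrightarrow> w \<in> V \<Longrightarrow>
    vmat_pow k L (a(c := Suc (a c))) u w = mmult V (A c) (vmat_pow k L a) u w"
  unfolding vmat_pow_def using fp_step[of c "[0..<k]" a] by auto

lemma nz_sum: fixes a :: "nat \<Rightarrow> nat" assumes "in_Nk k a" "sum a {..<k} = 0" shows "a = (\<lambda>_. 0)"
proof
  fix i show "a i = 0" using assms unfolding in_Nk_def by (cases "i < k") auto
qed

lemma path_vp: "l \<in> P \<Longrightarrow> 0 < vmat_pow k L (deg L l) (rng L l) (src L l)"
proof (induction "sum (deg L l) {..<k}" arbitrary: l)
  case 0
  have d: "deg L l = (\<lambda>_. 0)" by (rule nz_sum[OF deg_in[OF 0(2)] 0(1)[symmetric]])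
  hence lV: "l \<in> V" by (rule deg0_vert[OF 0(2)])
  show ?case using d vp_zero[OF lV lV] vert[OF lV] by (simp add: mident_def)
next
  case (Suc d)
  obtain c where c: "c < k" "0 < deg L l c"
  proof (rule ccontr)
    assume "\<not> thesis"
    hence "\<forall>i<k. deg L l i = 0" using that by auto
    hence "sum (deg L l) {..<k} = 0" by simp
    thus False using Suc(2) by simp
  qed
  define n where "n i = deg L l i - unitvec c i" for i
  have dl: "deg L l = (\<lambda>i. unitvec c i + n i)" using c unfolding n_def unitvec_def by auto
  obtain p where p: "fst p \<in> P" "snd p \<in> P" "deg L (fst p) = unitvec c" "deg L (snd p) = n"
        "src L (fst p) = rng L (snd p)" "cmp L (fst p) (snd p) = l"
    using ufp[OF Suc(3) dl] by blast
  have sn: "sum n {..<k} = d"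
  proof -
    have "sum (deg L l) {..<k} = sum (unitvec c) {..<k} + sum n {..<k}" using dl by (simp add: sum.distrib)
    moreover have "sum (unitvec c) {..<k} = 1" using c unfolding unitvec_def by simp
    ultimately show ?thesis using Suc(2) by simp
  qed
  have IH: "0 < vmat_pow k L n (rng L (snd p)) (src L (snd p))"
    using Suc(1)[of "snd p"] sn p by simp
  have lr: "rng L l = rng L (fst p)" "src L l = src L (snd p)" using cmp_in[OF p(1,2,5)] p(6) by auto
  have dl2: "deg L l = n(c := Suc (n c))" using dl unfolding unitvec_def by auto
  have uV: "rng L l \<in> V" "src L l \<in> V" using rng_V src_V Suc(3) by auto
  have mV: "rng L (snd p) \<in> V" using rng_V p by blast
  have "0 < A c (rng L (fst p)) (rng L (snd p)) * vmat_pow k L n (rng L (snd p)) (src L (snd p))"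
    using vmat_pos[OF p(1,3)] p(5) IH by simp
  also have "\<dots> \<le> mmult V (A c) (vmat_pow k L n) (rng L l) (src L l)"
    unfolding mmult_def lr
    by (rule member_le_sum[OF mV _ finV]) (use nn_vmat nn_vmat_pow in \<open>auto simp: nn_def\<close>)
  also have "\<dots> = vmat_pow k L (deg L l) (rng L l) (src L l)"
    using vp_step[OF c(1) uV, of n] dl2 by simp
  finally show ?case .
qed

lemma vp_path: "in_Nk k a \<Longrightarrow> u \<in> V \<Longrightarrow> w \<in> V \<Longrightarrow> 0 < vmat_pow k L a u w \<Longrightarrow>
    \<exists>l\<in>P. deg L l = a \<and> rng L l = u \<and> src L l = w"
proof (induction "sum a {..<k}" arbitrary: a u)
  case 0
  have a: "a = (\<lambda>_. 0)" by (rule nz_sum[OF 0(2) 0(1)[symmetric]])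
  hence "u = w" using vp_zero[OF 0(3,4)] 0(5) by (auto simp: mident_def split: if_splits)
  thus ?case using vert[OF 0(3)] a by auto
next
  case (Suc d)
  obtain c where c: "c < k" "0 < a c"
  proof (rule ccontr)
    assume "\<not> thesis"
    hence "\<forall>i<k. a i = 0" using that by auto
    hence "sum a {..<k} = 0" by simp
    thus False using Suc(2) by simp
  qed
  define a' where "a' = a(c := a c - 1)"
  have aa: "a = a'(c := Suc (a' c))" using c unfolding a'_def by auto
  have a'N: "in_Nk k a'" using Suc(3) c unfolding a'_def in_Nk_def by auto
  have sa: "sum a' {..<k} = d"
  proof -
    have "sum a {..<k} = sum a' {..<k} + 1"
      unfolding aa using c by (simp add: sum.remove[of "{..<k}" c] del: fun_upd_apply) (simp add: a'_def)
    thus ?thesis using Suc(2) by simp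
  qed
  have "0 < mmult V (A c) (vmat_pow k L a') u w" using vp_step[OF c(1) Suc(4,5), of a'] aa Suc(6) by simp
  then obtain m where m: "m \<in> V" "0 < A c u m * vmat_pow k L a' m w"
    unfolding mmult_def by (meson not_le sum_nonpos)
  have am: "A c u m \<noteq> 0" "0 < vmat_pow k L a' m w"
    using m(2) vmat_nonneg[of c u m] by (auto simp: zero_less_mult_iff)
  obtain \<mu> where mu: "\<mu> \<in> P" "deg L \<mu> = unitvec c" "rng L \<mu> = u" "src L \<mu> = m"
    using vmat_edge[OF am(1)] by blast
  obtain \<nu> where nu: "\<nu> \<in> P" "deg L \<nu> = a'" "rng L \<nu> = m" "src L \<nu> = w"
    using Suc(1)[OF sa[symmetric] a'N m(1) Suc(5) am(2)] by blast
  have cc: "src L \<mu> = rng L \<nu>" using mu nu by simp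
  have "deg L (cmp L \<mu> \<nu>) = a" using deg_cmp[OF mu(1) nu(1) cc] mu nu aa unfolding unitvec_def by auto
  thus ?case using cmp_in[OF mu(1) nu(1) cc] mu nu by blast
qed

end


definition prodk :: "nat \<Rightarrow> (nat \<Rightarrow> real) \<Rightarrow> (nat \<Rightarrow> nat) \<Rightarrow> real" where
  "prodk k r a = (\<Prod>i<k. r i ^ a i)"

definition phi :: "nat \<Rightarrow> (nat \<Rightarrow> nat) list \<Rightarrow> (nat \<Rightarrow> real) \<Rightarrow> real" where
  "phi k F r = (\<Sum>j<length F. prodk k r (F ! j))"

lemma subeig:
  assumes S: "finite S" and B: "\<forall>u\<in>S. \<forall>w\<in>S. 0 \<le> B u w" and r0: "0 < spec_rad S B"
  shows "\<exists>x. (\<forall>u\<in>S. 0 \<le> x u) \<and> (\<exists>u\<in>S. 0 < x u) \<and> (\<forall>u\<in>S. spec_rad S B * x u \<le> act S B x u)"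
proof -
  let ?r = "spec_rad S B"
  obtain z where z: "eigS S B z" "cmod z = ?r" using spec_rad_cases[OF S, of B] r0 by auto
  then obtain y where y0: "\<exists>u\<in>S. y u \<noteq> 0"
      and ev: "\<forall>v\<in>S. (\<Sum>w\<in>S. complex_of_real (B v w) * y w) = z * y v"
    unfolding eigS_def by blast
  define x where "x u = cmod (y u)" for u
  have "?r * x u \<le> act S B x u" if u: "u \<in> S" for u
  proof -
    have "?r * x u = cmod (\<Sum>w\<in>S. complex_of_real (B u w) * y w)"
      using ev u z(2) unfolding x_def by (simp add: norm_mult)
    also have "\<dots> \<le> (\<Sum>w\<in>S. cmod (complex_of_real (B u w) * y w))" by (rule norm_sum)
    also have "\<dots> = act S B x u" unfolding act_def x_def
      using B u by (intro sum.cong) (auto simp: norm_mult)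
    finally show ?thesis .
  qed
  moreover have "\<exists>u\<in>S. 0 < x u" using y0 unfolding x_def by auto
  moreover have "\<forall>u\<in>S. 0 \<le> x u" unfolding x_def by simp
  ultimately show ?thesis by blast
qed

context kg
begin

lemma DV: "convex D \<Longrightarrow> D \<subseteq> V" unfolding convex_def by blast
lemma finD: "convex D \<Longrightarrow> finite D" using DV finV finite_subset by blast

lemma mpow_act: assumes D: "convex D" and B: "respV L B" and ev: "\<forall>u\<in>D. act D B y u = c * y u"
  shows "\<forall>u\<in>D. act D (mpow V B n) y u = c ^ n * y u"
proof (induction n)
  case 0 show ?case using finD[OF D] by (simp add: act_mident)
next
  case (Suc n)
  show ?case
  proof
    fix u assume u: "u \<in> D"
    have "act D (mpow V B (Suc n)) y u = act D B (act D (mpow V B n) y) u"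
      using act_restrict[OF D B respV_mpow[OF B] u] by simp
    also have "\<dots> = act D B (\<lambda>w. c ^ n * y w) u" using Suc by (intro act_cong) auto
    also have "\<dots> = c ^ Suc n * y u" using ev u by (simp add: act_scale)
    finally show "act D (mpow V B (Suc n)) y u = c ^ Suc n * y u" .
  qed
qed

lemma fold_act: assumes D: "convex D" and ev: "\<forall>i\<in>set xs. \<forall>u\<in>D. act D (A i) x u = r i * x u"
  shows "\<forall>u\<in>D. act D (fp xs a) x u = (\<Prod>i\<leftarrow>xs. r i ^ a i) * x u"
  using ev
proof (induction xs)
  case Nil show ?case using finD[OF D] by (simp add: act_mident)
next
  case (Cons i xs)
  show ?case
  proof
    fix u assume u: "u \<in> D"
    let ?p = "(\<Prod>i\<leftarrow>xs. r i ^ a i)"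
    have "act D (fp (i # xs) a) x u = act D (mpow V (A i) (a i)) (act D (fp xs a) x) u"
      using act_restrict[OF D respV_mpow[OF respV_vmat] respV_fold u] by simp
    also have "\<dots> = act D (mpow V (A i) (a i)) (\<lambda>w. ?p * x w) u" using Cons by (intro act_cong) auto
    also have "\<dots> = ?p * act D (mpow V (A i) (a i)) x u" by (simp add: act_scale)
    also have "\<dots> = ?p * (r i ^ a i * x u)" using mpow_act[OF D respV_vmat, of i x "r i" "a i"] Cons u by simp
    finally show "act D (fp (i # xs) a) x u = (\<Prod>i\<leftarrow>i # xs. r i ^ a i) * x u" by simp
  qed
qed

lemma vp_act: assumes D: "convex D" and ev: "\<forall>i<k. \<forall>u\<in>D. act D (A i) x u = r i * x u" and u: "u \<in> D"
  shows "act D (vmat_pow k L a) x u = prodk k r a * x u"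
proof -
  have "act D (vmat_pow k L a) x u = (\<Prod>i\<leftarrow>[0..<k]. r i ^ a i) * x u"
    unfolding vmat_pow_def using fold_act[OF D, of "[0..<k]" x r a] ev u by auto
  also have "(\<Prod>i\<leftarrow>[0..<k]. r i ^ a i) = prodk k r a"
    unfolding prodk_def using prod.distinct_set_conv_list[of "[0..<k]" "\<lambda>i. r i ^ a i"]
    by (simp add: atLeast0LessThan)
  finally show ?thesis .
qed

lemma vF_act: assumes D: "convex D" and ev: "\<forall>i<k. \<forall>u\<in>D. act D (A i) x u = r i * x u" and u: "u \<in> D"
  shows "act D (vmat_F k L F) x u = phi k F r * x u"
proof -
  have "act D (vmat_F k L F) x u = (\<Sum>j<length F. act D (vmat_pow k L (F ! j)) x u)"
    unfolding vmat_F_def by (rule act_sum) simp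
  also have "\<dots> = (\<Sum>j<length F. prodk k r (F ! j) * x u)" using vp_act[OF D ev u] by simp
  also have "\<dots> = phi k F r * x u" unfolding phi_def by (simp add: sum_distrib_right)
  finally show ?thesis .
qed

lemma comm_A_vF: "comm V (A i) (vmat_F k L F)"
  unfolding vmat_F_def vmat_pow_def
  by (rule comm_sum) (auto intro!: comm_fold finV simp: comm_vmat)

lemma comm_restrict: assumes D: "convex D" and u: "u \<in> D"
  shows "act D (vmat_F k L F) (act D (A i) y) u = act D (A i) (act D (vmat_F k L F) y) u"
proof -
  have "act D (vmat_F k L F) (act D (A i) y) u = act D (mmult V (vmat_F k L F) (A i)) y u"
    using act_restrict[OF D respV_vmat_F respV_vmat u] by simp
  also have "\<dots> = act D (mmult V (A i) (vmat_F k L F)) y u"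
  proof (intro act_mat_cong ballI)
    fix w assume w: "w \<in> D"
    have uw: "u \<in> V" "w \<in> V" using DV[OF D] u w by auto
    show "mmult V (vmat_F k L F) (A i) u w = mmult V (A i) (vmat_F k L F) u w"
      using comm_A_vF[of i F] uw unfolding comm_def by simp
  qed
  also have "\<dots> = act D (A i) (act D (vmat_F k L F) y) u"
    using act_restrict[OF D respV_vmat respV_vmat_F u] by simp
  finally show ?thesis .
qed

lemma wc_pos: "well_chosen k L F \<Longrightarrow> u \<in> V \<Longrightarrow> w \<in> V \<Longrightarrow> 0 < vmat_F k L F u w \<longleftrightarrow> Rnz L u w"
  unfolding well_chosen_def Rnz_def by blast

lemma eig_comp:
  assumes wc: "well_chosen k L F" and D: "is_component L D" and nt: "\<not> trivial_comp L D"
  shows "\<exists>x. (\<forall>u\<in>D. 0 < x u) \<and> (\<forall>i<k. \<forall>u\<in>D. act D (A i) x u = spec_rad D (A i) * x u)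
     \<and> (\<forall>u\<in>D. act D (vmat_F k L F) x u = spec_rad D (vmat_F k L F) * x u)
     \<and> (\<forall>y. (\<forall>u\<in>D. act D (vmat_F k L F) y u = spec_rad D (vmat_F k L F) * y u) \<longrightarrow> (\<exists>c. \<forall>u\<in>D. y u = c * x u))
     \<and> spec_rad D (vmat_F k L F) = phi k F (\<lambda>i. spec_rad D (A i))"
proof -
  have cD: "convex D" by (rule convex_comp[OF D])
  have fD: "finite D" by (rule finD[OF cD])
  have neD: "D \<noteq> {}" by (rule comp_ne[OF D])
  have Pp: "\<forall>u\<in>D. \<forall>w\<in>D. 0 < vmat_F k L F u w"
    using wc_pos[OF wc] nontriv_R[OF D nt] DV[OF cD] by blast
  have M: "\<forall>i\<in>{..<k}. \<forall>u\<in>D. \<forall>w\<in>D. 0 \<le> A i u w" by (simp add: vmat_nonneg)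
  have cm: "\<forall>i\<in>{..<k}. \<forall>y. \<forall>u\<in>D. act D (vmat_F k L F) (act D (A i) y) u = act D (A i) (act D (vmat_F k L F) y) u"
    using comm_restrict[OF cD] by blast
  obtain x where x: "\<forall>u\<in>D. 0 < x u" "\<forall>u\<in>D. act D (vmat_F k L F) x u = spec_rad D (vmat_F k L F) * x u"
      "\<forall>i\<in>{..<k}. \<forall>u\<in>D. act D (A i) x u = spec_rad D (A i) * x u"
      "\<forall>y. (\<forall>u\<in>D. act D (vmat_F k L F) y u = spec_rad D (vmat_F k L F) * y u) \<longrightarrow> (\<exists>c. \<forall>u\<in>D. y u = c * x u)"
    using common_eig[OF fD neD Pp M cm] by blast
  have ev: "\<forall>i<k. \<forall>u\<in>D. act D (A i) x u = spec_rad D (A i) * x u" using x(3) by auto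
  obtain u where u: "u \<in> D" using neD by blast
  have e1: "act D (vmat_F k L F) x u = phi k F (\<lambda>i. spec_rad D (A i)) * x u"
    by (rule vF_act[OF cD ev u])
  have e2: "act D (vmat_F k L F) x u = spec_rad D (vmat_F k L F) * x u" using x(2) u by blast
  have "x u \<noteq> 0" using x(1) u by force
  hence "phi k F (\<lambda>i. spec_rad D (A i)) = spec_rad D (vmat_F k L F)"
    using e1 e2 mult_right_cancel[of "x u"] by metis
  hence "spec_rad D (vmat_F k L F) = phi k F (\<lambda>i. spec_rad D (A i))" by simp
  thus ?thesis using x ev by blast
qed

end


context kg
begin

definition Ed :: "('a \<times> 'a) set" where
  "Ed = {(u,w). u \<in> V \<and> w \<in> V \<and> (\<exists>c<k. 0 < A c u w)}"

lemma Ed_fin: "finite Ed"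
proof -
  have "Ed \<subseteq> V \<times> V" unfolding Ed_def by auto
  thus ?thesis using finV finite_subset by blast
qed

lemma path_trancl: "l \<in> P \<Longrightarrow> deg L l \<noteq> (\<lambda>_. 0) \<Longrightarrow> (rng L l, src L l) \<in> Ed\<^sup>+"
proof (induction "sum (deg L l) {..<k}" arbitrary: l)
  case 0
  have "deg L l = (\<lambda>_. 0)" by (rule nz_sum[OF deg_in[OF 0(2)] 0(1)[symmetric]])
  with 0(3) show ?case by simp
next
  case (Suc d)
  obtain c where c: "c < k" "0 < deg L l c"
  proof (rule ccontr)
    assume "\<not> thesis"
    hence "\<forall>i<k. deg L l i = 0" using that by auto
    hence "sum (deg L l) {..<k} = 0" by simp
    thus False using Suc(2) by simp
  qed
  define n where "n i = deg L l i - unitvec c i" for i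
  have dl: "deg L l = (\<lambda>i. unitvec c i + n i)" using c unfolding n_def unitvec_def by auto
  obtain p where p: "fst p \<in> P" "snd p \<in> P" "deg L (fst p) = unitvec c" "deg L (snd p) = n"
        "src L (fst p) = rng L (snd p)" "cmp L (fst p) (snd p) = l"
    using ufp[OF Suc(3) dl] by blast
  have sn: "sum n {..<k} = d"
  proof -
    have "sum (deg L l) {..<k} = sum (unitvec c) {..<k} + sum n {..<k}" using dl by (simp add: sum.distrib)
    moreover have "sum (unitvec c) {..<k} = 1" using c unfolding unitvec_def by simp
    ultimately show ?thesis using Suc(2) by simp
  qed
  have lr: "rng L l = rng L (fst p)" "src L l = src L (snd p)" using cmp_in[OF p(1,2,5)] p(6) by auto
  have e: "(rng L (fst p), rng L (snd p)) \<in> Ed"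
    unfolding Ed_def using vmat_pos[OF p(1,3)] p(5) rng_V src_V p c(1) by auto
  show ?case
  proof (cases "n = (\<lambda>_. 0)")
    case True
    hence "snd p \<in> V" using deg0_vert[OF p(2)] p(4) by simp
    hence "src L (snd p) = rng L (snd p)" using vert by simp
    thus ?thesis using e lr by auto
  next
    case False
    have "(rng L (snd p), src L (snd p)) \<in> Ed\<^sup>+" using Suc(1)[of "snd p"] sn p False by simp
    thus ?thesis using e lr by (auto intro: trancl_into_trancl2)
  qed
qed

lemma relpow_vp: "(u,w) \<in> Ed ^^ j \<Longrightarrow> u \<in> V \<Longrightarrow> w \<in> V \<Longrightarrow>
   \<exists>a. in_Nk k a \<and> sum a {..<k} = j \<and> 0 < vmat_pow k L a u w"
proof (induction j arbitrary: u)
  case 0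
  hence "u = w" by simp
  thus ?case using vp_zero[OF 0(2,3)] by (intro exI[of _ "\<lambda>_. 0"]) (auto simp: in_Nk_def mident_def)
next
  case (Suc j)
  obtain m where m: "(u,m) \<in> Ed" "(m,w) \<in> Ed ^^ j" using relpow_Suc_D2[OF Suc(2)] by blast
  have mV: "m \<in> V" using m(1) unfolding Ed_def by auto
  obtain c where c: "c < k" "0 < A c u m" using m(1) unfolding Ed_def by auto
  obtain a' where a': "in_Nk k a'" "sum a' {..<k} = j" "0 < vmat_pow k L a' m w"
    using Suc(1)[OF m(2) mV Suc(4)] by blast
  define a where "a = a'(c := Suc (a' c))"
  have aN: "in_Nk k a" using a' c unfolding a_def in_Nk_def by auto
  have sa: "sum a {..<k} = Suc j"
  proof -
    have s1: "sum a {..<k} = a c + sum a ({..<k} - {c})" using c by (simp add: sum.remove)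
    have s2: "sum a ({..<k} - {c}) = sum a' ({..<k} - {c})" unfolding a_def by (intro sum.cong) auto
    have s3: "sum a' {..<k} = a' c + sum a' ({..<k} - {c})" using c by (simp add: sum.remove)
    have s4: "a c = Suc (a' c)" unfolding a_def by simp
    show ?thesis using s1 s2 s3 s4 a'(2) by simp
  qed
  have "0 < A c u m * vmat_pow k L a' m w" using c a' by simp
  also have "\<dots> \<le> mmult V (A c) (vmat_pow k L a') u w"
    unfolding mmult_def
    by (rule member_le_sum[OF mV _ finV]) (use nn_vmat nn_vmat_pow in \<open>auto simp: nn_def\<close>)
  also have "\<dots> = vmat_pow k L a u w" unfolding a_def using vp_step[OF c(1) Suc(3,4)] by simp
  finally show ?case using aN sa by blast
qed

definition Bd :: nat where "Bd = Suc (card Ed)"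

definition F0 :: "(nat \<Rightarrow> nat) list" where
  "F0 = map (\<lambda>xs i. if i < k then xs ! i else 0)
          (filter (\<lambda>xs. xs \<noteq> replicate k 0) (List.n_lists k [0..<Suc Bd]))"

lemma F0_mem: "a \<in> set F0 \<longleftrightarrow> in_Nk k a \<and> a \<noteq> (\<lambda>_. 0) \<and> (\<forall>i<k. a i \<le> Bd)"
proof
  assume "a \<in> set F0"
  hence "a \<in> (\<lambda>xs i. if i < k then xs ! i else 0) ` {xs \<in> set (List.n_lists k [0..<Suc Bd]). xs \<noteq> replicate k 0}"
    unfolding F0_def set_map set_filter .
  then obtain xs where xs0: "xs \<in> set (List.n_lists k [0..<Suc Bd])" "xs \<noteq> replicate k 0"
      "a = (\<lambda>i. if i < k then xs ! i else 0)" by blast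
  have xs: "length xs = k" "set xs \<subseteq> {0..<Suc Bd}" "xs \<noteq> replicate k 0"
      "a = (\<lambda>i. if i < k then xs ! i else 0)" using xs0 unfolding set_n_lists by auto
  have "in_Nk k a" using xs(4) unfolding in_Nk_def by auto
  moreover have "\<forall>i<k. a i \<le> Bd" using xs nth_mem by fastforce
  moreover have "a \<noteq> (\<lambda>_. 0)"
  proof
    assume a0: "a = (\<lambda>_. 0)"
    have "xs = replicate k 0"
    proof (rule nth_equalityI)
      show "length xs = length (replicate k 0)" using xs by simp
      fix i assume "i < length xs"
      hence "a i = 0" "i < k" using a0 xs(1) by auto
      thus "xs ! i = replicate k 0 ! i" using xs(4) by simp
    qed
    with xs(3) show False by simp
  qed
  ultimately show "in_Nk k a \<and> a \<noteq> (\<lambda>_. 0) \<and> (\<forall>i<k. a i \<le> Bd)" by blast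
next
  assume a: "in_Nk k a \<and> a \<noteq> (\<lambda>_. 0) \<and> (\<forall>i<k. a i \<le> Bd)"
  define xs where "xs = map a [0..<k]"
  have "xs \<in> set (List.n_lists k [0..<Suc Bd])"
    unfolding set_n_lists xs_def using a by auto
  moreover have "xs \<noteq> replicate k 0"
  proof
    assume xr: "xs = replicate k 0"
    have "a = (\<lambda>_. 0)"
    proof
      fix i
      show "a i = 0"
      proof (cases "i < k")
        case True
        have "xs ! i = 0" using xr True by simp
        thus ?thesis using True unfolding xs_def by simp
      next
        case False thus ?thesis using a unfolding in_Nk_def by auto
      qed
    qed
    with a show False by blast
  qed
  moreover have "a = (\<lambda>i. if i < k then xs ! i else 0)"
    using a unfolding xs_def in_Nk_def by auto
  ultimately show "a \<in> set F0" unfolding F0_def by auto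
qed

lemma unitvec_F0: "i < k \<Longrightarrow> unitvec i \<in> set F0"
  unfolding F0_mem in_Nk_def Bd_def using unitvec_nz by (auto simp: unitvec_def)

lemma wc_F0: "well_chosen k L F0"
  unfolding well_chosen_def
proof (intro conjI)
  show "\<forall>a\<in>set F0. in_Nk k a \<and> a \<noteq> (\<lambda>_. 0)" using F0_mem by blast
next
  show "\<forall>v\<in>V. \<forall>w\<in>V. (0 < vmat_F k L F0 v w) = (\<exists>l\<in>P. deg L l \<noteq> (\<lambda>_. 0) \<and> rng L l = v \<and> src L l = w)"
  proof (intro ballI)
  fix v w assume v: "v \<in> V" and w: "w \<in> V"
  show "0 < vmat_F k L F0 v w \<longleftrightarrow> (\<exists>l\<in>P. deg L l \<noteq> (\<lambda>_. 0) \<and> rng L l = v \<and> src L l = w)"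
  proof
    assume "0 < vmat_F k L F0 v w"
    then obtain j where j: "j < length F0" "0 < vmat_pow k L (F0 ! j) v w"
      unfolding vmat_F_def by (meson lessThan_iff not_le sum_nonpos)
    have "F0 ! j \<in> set F0" using j by simp
    hence fj: "in_Nk k (F0 ! j)" "F0 ! j \<noteq> (\<lambda>_. 0)" using F0_mem by auto
    obtain l where "l \<in> P" "deg L l = F0 ! j" "rng L l = v" "src L l = w" using vp_path[OF fj(1) v w j(2)] by blast
    thus "\<exists>l\<in>P. deg L l \<noteq> (\<lambda>_. 0) \<and> rng L l = v \<and> src L l = w" using fj by metis
  next
    assume "\<exists>l\<in>P. deg L l \<noteq> (\<lambda>_. 0) \<and> rng L l = v \<and> src L l = w"
    then obtain l where l: "l \<in> P" "deg L l \<noteq> (\<lambda>_. 0)" "rng L l = v" "src L l = w" by blast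
    have "(v,w) \<in> Ed\<^sup>+" using path_trancl[OF l(1,2)] l by simp
    then obtain j where j: "0 < j" "j \<le> card Ed" "(v,w) \<in> Ed ^^ j"
      using trancl_finite_eq_relpow[OF Ed_fin] by auto
    obtain a where a: "in_Nk k a" "sum a {..<k} = j" "0 < vmat_pow k L a v w"
      using relpow_vp[OF j(3) v w] by blast
    have "a \<noteq> (\<lambda>_. 0)" using a(2) j(1) by auto
    moreover have "\<forall>i<k. a i \<le> Bd"
    proof (intro allI impI)
      fix i assume "i < k"
      hence "a i \<le> sum a {..<k}" by (intro member_le_sum) auto
      thus "a i \<le> Bd" using a(2) j(2) unfolding Bd_def by simp
    qed
    ultimately have "a \<in> set F0" using F0_mem a(1) by blast
    then obtain j0 where j0: "j0 < length F0" "F0 ! j0 = a" unfolding in_set_conv_nth by blast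
    have "vmat_pow k L a v w \<le> (\<Sum>j<length F0. vmat_pow k L (F0 ! j) v w)"
      using j0 member_le_sum[of j0 "{..<length F0}" "\<lambda>j. vmat_pow k L (F0 ! j) v w"] nn_vmat_pow
      unfolding nn_def by auto
    thus "0 < vmat_F k L F0 v w" unfolding vmat_F_def using a(3) by simp
  qed
  qed
qed

end


lemma prodk_mono: assumes "\<forall>i<k. 0 \<le> r i \<and> r i \<le> s i" shows "prodk k r a \<le> prodk k s a"
  unfolding prodk_def using assms by (intro prod_mono) (auto intro: power_mono)

lemma prodk_nonneg: assumes "\<forall>i<k. 0 \<le> r i" shows "0 \<le> prodk k r a"
  unfolding prodk_def using assms by (intro prod_nonneg) auto

lemma prodk_unit: assumes "i < k" shows "prodk k r (unitvec i) = r i"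
proof -
  have "prodk k r (unitvec i) = (\<Prod>l<k. if l = i then r l else 1)"
    unfolding prodk_def unitvec_def by (intro prod.cong) auto
  also have "\<dots> = r i" using assms by (simp add: prod.delta)
  finally show ?thesis .
qed

lemma phi_cong: "\<forall>i<k. r i = s i \<Longrightarrow> phi k F r = phi k F s"
  unfolding phi_def prodk_def by (intro sum.cong prod.cong) auto

lemma phi_mono: assumes "\<forall>i<k. 0 \<le> r i \<and> r i \<le> s i" shows "phi k F r \<le> phi k F s"
  unfolding phi_def using prodk_mono[OF assms] by (intro sum_mono) auto

lemma phi_nonneg: assumes "\<forall>i<k. 0 \<le> r i" shows "0 \<le> phi k F r"
  unfolding phi_def using prodk_nonneg[OF assms] by (intro sum_nonneg) auto

lemma phi_strict: assumes rs: "\<forall>i<k. 0 \<le> r i \<and> r i \<le> s i" and i: "i < k" "r i < s i"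
  and u: "unitvec i \<in> set F"
  shows "phi k F r < phi k F s"
proof -
  obtain j0 where j0: "j0 < length F" "F ! j0 = unitvec i" using u unfolding in_set_conv_nth by blast
  show ?thesis unfolding phi_def
  proof (rule sum_strict_mono_ex1)
    show "\<forall>x\<in>{..<length F}. prodk k r (F ! x) \<le> prodk k s (F ! x)" using prodk_mono[OF rs] by auto
    show "\<exists>a\<in>{..<length F}. prodk k r (F ! a) < prodk k s (F ! a)"
      using j0 i prodk_unit[OF i(1)] by (intro bexI[of _ j0]) auto
  qed simp
qed

lemma act_ext0: assumes "D \<subseteq> S" "finite S"
  shows "act S B (\<lambda>w. if w \<in> D then f w else 0) m = act D B f m"
proof -
  have "act S B (\<lambda>w. if w \<in> D then f w else 0) m = (\<Sum>w\<in>S. if w \<in> D then B m w * f w else 0)"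
    unfolding act_def by (intro sum.cong) auto
  also have "\<dots> = (\<Sum>w\<in>S \<inter> D. B m w * f w)" by (rule sum.inter_restrict[symmetric, OF assms(2)])
  also have "S \<inter> D = D" using assms by auto
  finally show ?thesis unfolding act_def by simp
qed

lemma act_zero_vec: "\<forall>w\<in>S. f w = 0 \<Longrightarrow> act S B f m = 0"
  unfolding act_def by simp

context kg
begin

lemma triv_A0: assumes D: "is_component L D" "trivial_comp L D" and uw: "u \<in> D" "w \<in> D"
  shows "A i u w = 0"
proof (rule ccontr)
  assume "A i u w \<noteq> 0"
  then obtain l where "l \<in> P" "deg L l = unitvec i" "rng L l = u" "src L l = w" using vmat_edge by blast
  hence "Rnz L u w" unfolding Rnz_def using unitvec_nz by metis
  thus False using triv_noR[OF D uw] by blast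
qed

lemma triv_F0: assumes wc: "well_chosen k L F" and D: "is_component L D" "trivial_comp L D" and uw: "u \<in> D" "w \<in> D"
  shows "vmat_F k L F u w = 0"
proof -
  have "\<not> Rnz L u w" by (rule triv_noR[OF D uw])
  moreover have "u \<in> V" "w \<in> V" using comp_sub[OF D(1)] uw by auto
  ultimately have "\<not> 0 < vmat_F k L F u w" using wc_pos[OF wc] by blast
  thus ?thesis using nn_vmat_F[of F] unfolding nn_def by (metis less_eq_real_def)
qed

lemma triv_rad_A: "is_component L D \<Longrightarrow> trivial_comp L D \<Longrightarrow> spec_rad D (A i) = 0"
  using spec_rad_zero[OF finD[OF convex_comp]] triv_A0 by blast

lemma triv_rad_F: "well_chosen k L F \<Longrightarrow> is_component L D \<Longrightarrow> trivial_comp L D \<Longrightarrow> spec_rad D (vmat_F k L F) = 0"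
  using spec_rad_zero[OF finD[OF convex_comp]] triv_F0 by blast

lemma pos_nontriv: assumes C: "is_component L C" and pos: "positive_comp k L C" shows "\<not> trivial_comp L C"
proof
  assume "trivial_comp L C"
  hence "spec_rad C (A 0) = 0" by (rule triv_rad_A[OF C])
  moreover have "0 < spec_rad C (A 0)" using pos k1 unfolding positive_comp_def by auto
  ultimately show False by simp
qed

lemma W_sub: "closure_above L C \<subseteq> V" using cl_iff by blast

lemma C_W: "is_component L C \<Longrightarrow> C \<subseteq> closure_above L C"
  using cl_iff comp_sub le_refl by blast

lemma W_conv: assumes C: "is_component L C" shows "convex (closure_above L C)"
  unfolding convex_def
proof (intro conjI ballI allI impI)
  show "closure_above L C \<subseteq> V" by (rule W_sub)
  fix u w m assume u: "u \<in> closure_above L C" and w: "w \<in> closure_above L C" and um: "lq u m" and mw: "lq m w"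
  obtain c where c: "c \<in> C" "lq w c" using w cl_iff by blast
  have "lq m c" using le_trans[OF mw c(2)] .
  moreover have "m \<in> V" using le_V um by blast
  ultimately show "m \<in> closure_above L C" using cl_iff c by blast
qed

lemma C_rows: assumes C: "is_component L C" and c: "c \<in> C" and m: "m \<in> closure_above L C" and cm: "lq c m"
  shows "m \<in> C"
proof -
  obtain c' where c': "c' \<in> C" "lq m c'" using m cl_iff by blast
  show ?thesis by (rule comp_convex[OF C c c'(1) cm c'(2)])
qed

lemma act_W_C: assumes C: "is_component L C" and B: "respV L B" and c: "c \<in> C"
  shows "act (closure_above L C) B y c = act C B y c"
proof -
  have "act (closure_above L C) B y c = (\<Sum>w\<in>C. B c w * y w)"
    unfolding act_def
  proof (rule sum.mono_neutral_right[OF _ C_W[OF C]])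
    show "finite (closure_above L C)" using W_sub finV finite_subset by blast
    show "\<forall>i\<in>closure_above L C - C. B c i * y i = 0"
    proof
      fix w assume w: "w \<in> closure_above L C - C"
      have "B c w = 0"
      proof (rule ccontr)
        assume "B c w \<noteq> 0"
        hence "lq c w" using B c w comp_sub[OF C] W_sub unfolding respV_def by blast
        hence "w \<in> C" using C_rows[OF C c] w by blast
        thus False using w by blast
      qed
      thus "B c w * y w = 0" by simp
    qed
  qed
  thus ?thesis unfolding act_def .
qed

lemma act_W_split: assumes C: "is_component L C"
  shows "act (closure_above L C) B y m = act C B y m + act (closure_above L C - C) B y m"
proof -
  have f: "finite (closure_above L C)" using W_sub finV finite_subset by blast
  have "closure_above L C = C \<union> (closure_above L C - C)" using C_W[OF C] by blast
  hence "act (closure_above L C) B y m = act (C \<union> (closure_above L C - C)) B y m" by simp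
  also have "\<dots> = act C B y m + act (closure_above L C - C) B y m"
    unfolding act_def
    by (rule sum.union_disjoint) (use f finite_subset C_W[OF C] in auto)
  finally show ?thesis .
qed

end


context kg
begin

lemma main_fwd:
  assumes C: "is_component L C" and wc: "well_chosen k L F" and pos: "positive_comp k L C"
    and harm: "F_harmonic k L F C"
    and D: "is_component L D" and DS: "D \<subseteq> closure_above L C - C"
  shows "(\<forall>i<k. spec_rad D (A i) \<le> spec_rad C (A i)) \<and> (\<exists>i<k. spec_rad D (A i) \<noteq> spec_rad C (A i))"
proof -
  let ?W = "closure_above L C"
  let ?S = "closure_above L C - C"
  let ?F = "vmat_F k L F"
  let ?\<Phi> = "spec_rad C ?F"
  define s where "s i = spec_rad C (A i)" for i
  have spos: "\<forall>i<k. 0 < s i" using pos unfolding positive_comp_def s_def by auto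
  have ntC: "\<not> trivial_comp L C" by (rule pos_nontriv[OF C pos])
  have fW: "finite ?W" using W_sub finV finite_subset by blast
  have fS: "finite ?S" using fW by simp
  have fC: "finite C" by (rule finD[OF convex_comp[OF C]])
  have CV: "C \<subseteq> V" by (rule comp_sub[OF C])
  have SV: "?S \<subseteq> V" using W_sub by blast
  have neD: "D \<noteq> {}" by (rule comp_ne[OF D])
  hence neS: "?S \<noteq> {}" using DS by blast
  have rS: "spec_rad ?S ?F < ?\<Phi>" using harm neS unfolding F_harmonic_def by auto
  have rS0: "0 \<le> spec_rad ?S ?F" by (rule spec_rad_nonneg[OF fS])
  have Phi0: "0 < ?\<Phi>" using rS rS0 by linarith
  have Fnn: "\<forall>u w. 0 \<le> ?F u w" using nn_vmat_F unfolding nn_def by blast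
  obtain z where z: "\<forall>u\<in>C. 0 < z u" "\<forall>i<k. \<forall>u\<in>C. act C (A i) z u = s i * z u"
      "\<forall>u\<in>C. act C ?F z u = ?\<Phi> * z u"
      "\<forall>y. (\<forall>u\<in>C. act C ?F y u = ?\<Phi> * y u) \<longrightarrow> (\<exists>c. \<forall>u\<in>C. y u = c * z u)"
    using eig_comp[OF wc C ntC] unfolding s_def by blast
  define b where "b m = act C ?F z m" for m
  obtain u where u: "\<forall>m\<in>?S. ?\<Phi> * u m - act ?S ?F u m = b m"
    using solve[OF fS rS] by blast
  have b0: "0 \<le> b m" for m unfolding b_def using Fnn z(1) by (intro act_nonneg) (auto intro: less_imp_le)
  have u0: "\<forall>m\<in>?S. 0 \<le> u m"
  proof (rule ccontr)
    assume "\<not> ?thesis"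
    then obtain m0 where m0: "m0 \<in> ?S" "u m0 < 0" by force
    define ng where "ng m = max 0 (- u m)" for m
    have ng0: "\<forall>m\<in>?S. 0 \<le> ng m" unfolding ng_def by simp
    have "\<forall>m\<in>?S. ?\<Phi> * ng m \<le> act ?S ?F ng m"
    proof
      fix m assume m: "m \<in> ?S"
      show "?\<Phi> * ng m \<le> act ?S ?F ng m"
      proof (cases "0 \<le> u m")
        case True
        hence "ng m = 0" unfolding ng_def by simp
        thus ?thesis using act_nonneg[of ?S ?F m ng] Fnn ng0 by simp
      next
        case False
        hence "?\<Phi> * ng m = - (?\<Phi> * u m)" unfolding ng_def by simp
        also have "\<dots> = - (b m + act ?S ?F u m)" using u m by (simp add: algebra_simps)
        also have "\<dots> \<le> - act ?S ?F u m" using b0[of m] by simp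
        also have "\<dots> = act ?S ?F (\<lambda>w. (-1) * u w) m" using act_scale[of ?S ?F "-1" u m] by simp
        also have "\<dots> \<le> act ?S ?F ng m" using Fnn by (intro act_mono) (auto simp: ng_def)
        finally show ?thesis .
      qed
    qed
    moreover have "0 < ng m0" using m0 unfolding ng_def by simp
    ultimately have "?\<Phi> \<le> spec_rad ?S ?F"
      using spec_rad_lower[OF fS _ ng0 m0(1)] Fnn by blast
    thus False using rS by simp
  qed
  have bpos: "0 < b m" if m: "m \<in> ?S" for m
  proof -
    obtain c where c: "c \<in> C" "lq m c" using m cl_iff by blast
    have "m \<noteq> c" using m c by blast
    hence "Rnz L m c" using Rnz_neq c by blast
    hence "0 < ?F m c" using wc_pos[OF wc] m c SV CV by blast
    hence t: "0 < ?F m c * z c" using z(1) c by simp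
    show ?thesis unfolding b_def act_def
    proof (rule sum_pos2[where f="\<lambda>w. ?F m w * z w", OF fC c(1) t])
      fix w assume "w \<in> C" thus "0 \<le> ?F m w * z w" using Fnn z(1) by (simp add: less_imp_le)
    qed
  qed
  have upos: "\<forall>m\<in>?S. 0 < u m"
  proof
    fix m assume m: "m \<in> ?S"
    have "0 \<le> act ?S ?F u m" using Fnn u0 by (intro act_nonneg) auto
    hence "0 < ?\<Phi> * u m" using u m bpos[OF m] by (simp add: algebra_simps)
    thus "0 < u m" using Phi0 by (simp add: zero_less_mult_iff)
  qed
  define x where "x m = (if m \<in> C then z m else u m)" for m
  have xpos: "\<forall>m\<in>?W. 0 < x m" using z(1) upos unfolding x_def by auto
  have xC: "\<forall>m\<in>C. x m = z m" unfolding x_def by simp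
  have xS: "\<forall>m\<in>?S. x m = u m" unfolding x_def by simp
  have WC: "C \<subseteq> ?W" by (rule C_W[OF C])
  have cW: "convex ?W" by (rule W_conv[OF C])
  have xev: "\<forall>m\<in>?W. act ?W ?F x m = ?\<Phi> * x m"
  proof
    fix m assume m: "m \<in> ?W"
    show "act ?W ?F x m = ?\<Phi> * x m"
    proof (cases "m \<in> C")
      case True
      have "act ?W ?F x m = act C ?F x m" by (rule act_W_C[OF C respV_vmat_F True])
      also have "\<dots> = act C ?F z m" using xC by (intro act_cong) auto
      also have "\<dots> = ?\<Phi> * x m" using z(3) True xC by simp
      finally show ?thesis .
    next
      case False
      hence mS: "m \<in> ?S" using m by blast
      have "act ?W ?F x m = act C ?F x m + act ?S ?F x m" by (rule act_W_split[OF C])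
      also have "act C ?F x m = b m" unfolding b_def using xC by (intro act_cong) auto
      also have "act ?S ?F x m = act ?S ?F u m" using xS by (intro act_cong) auto
      also have "b m + act ?S ?F u m = ?\<Phi> * u m" using u mS by (simp add: algebra_simps)
      finally show ?thesis using xS mS by simp
    qed
  qed
  have uniqW: "\<exists>c. \<forall>m\<in>?W. y m = c * x m" if yev: "\<forall>m\<in>?W. act ?W ?F y m = ?\<Phi> * y m" for y
  proof -
    have "\<forall>m\<in>C. act C ?F y m = ?\<Phi> * y m"
    proof
      fix m assume m: "m \<in> C"
      have "act C ?F y m = act ?W ?F y m" using act_W_C[OF C respV_vmat_F m] by simp
      also have "\<dots> = ?\<Phi> * y m" using yev m WC by blast
      finally show "act C ?F y m = ?\<Phi> * y m" .
    qed
    then obtain c where c: "\<forall>m\<in>C. y m = c * z m" using z(4) by blast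
    define v where "v m = y m - c * x m" for m
    have v0: "\<forall>m\<in>C. v m = 0" using c xC unfolding v_def by simp
    have vev: "\<forall>m\<in>?S. act ?S ?F v m = ?\<Phi> * v m"
    proof
      fix m assume m: "m \<in> ?S"
      have "act ?W ?F v m = act ?W ?F y m - c * act ?W ?F x m"
        unfolding v_def by (simp add: act_diff act_scale)
      also have "\<dots> = ?\<Phi> * v m" using yev xev m unfolding v_def by (simp add: algebra_simps)
      finally have e: "act ?W ?F v m = ?\<Phi> * v m" .
      have "act ?W ?F v m = act C ?F v m + act ?S ?F v m" by (rule act_W_split[OF C])
      also have "act C ?F v m = 0" using v0 by (rule act_zero_vec)
      finally show "act ?S ?F v m = ?\<Phi> * v m" using e by simp
    qed
    have "\<forall>m\<in>?S. v m = 0"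
    proof (rule ccontr)
      assume "\<not> ?thesis"
      hence "\<exists>m\<in>?S. v m \<noteq> 0" by blast
      hence "eigS ?S ?F (complex_of_real ?\<Phi>)" by (rule eigS_real[OF _ vev])
      hence "cmod (complex_of_real ?\<Phi>) \<le> spec_rad ?S ?F" by (rule spec_rad_ge[OF fS])
      thus False using rS Phi0 by simp
    qed
    hence "\<forall>m\<in>?W. v m = 0" using v0 by blast
    thus ?thesis unfolding v_def by (intro exI[of _ c]) auto
  qed
  obtain c1 where c1: "c1 \<in> C" using comp_ne[OF C] by blast
  have xA: "\<forall>m\<in>?W. act ?W (A i) x m = s i * x m" if i: "i < k" for i
  proof -
    define yi where "yi = act ?W (A i) x"
    have "\<forall>m\<in>?W. act ?W ?F yi m = ?\<Phi> * yi m"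
    proof
      fix m assume m: "m \<in> ?W"
      have "act ?W ?F yi m = act ?W (A i) (act ?W ?F x) m" unfolding yi_def by (rule comm_restrict[OF cW m])
      also have "\<dots> = act ?W (A i) (\<lambda>w. ?\<Phi> * x w) m" using xev by (intro act_cong) auto
      also have "\<dots> = ?\<Phi> * yi m" unfolding yi_def by (simp add: act_scale)
      finally show "act ?W ?F yi m = ?\<Phi> * yi m" .
    qed
    then obtain c where c: "\<forall>m\<in>?W. yi m = c * x m" using uniqW by blast
    have "yi c1 = act C (A i) x c1" unfolding yi_def by (rule act_W_C[OF C respV_vmat c1])
    also have "\<dots> = act C (A i) z c1" using xC by (intro act_cong) auto
    also have "\<dots> = s i * x c1" using z(2) i c1 xC by simp
    finally have "c * x c1 = s i * x c1" using c c1 WC by auto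
    moreover have "x c1 \<noteq> 0" using xpos c1 WC by force
    ultimately have "c = s i" by simp
    thus ?thesis using c yi_def by simp
  qed
  have DW: "D \<subseteq> ?W" using DS by blast
  have fD: "finite D" by (rule finD[OF convex_comp[OF D]])
  have le: "\<forall>i<k. spec_rad D (A i) \<le> s i"
  proof (intro allI impI)
    fix i assume i: "i < k"
    show "spec_rad D (A i) \<le> s i"
    proof (rule spec_rad_upper[OF fD neD])
      show "\<forall>u\<in>D. \<forall>w\<in>D. 0 \<le> A i u w" by (simp add: vmat_nonneg)
      show "\<forall>u\<in>D. 0 < x u" using xpos DW by blast
      show "\<forall>u\<in>D. act D (A i) x u \<le> s i * x u"
      proof
        fix m assume m: "m \<in> D"
        have "act D (A i) x m \<le> act ?W (A i) x m" unfolding act_def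
          by (rule sum_mono2[OF fW DW]) (use xpos vmat_nonneg in \<open>auto intro: mult_nonneg_nonneg less_imp_le\<close>)
        also have "\<dots> = s i * x m" using xA[OF i] m DW by blast
        finally show "act D (A i) x m \<le> s i * x m" .
      qed
    qed
  qed
  have ne: "\<exists>i<k. spec_rad D (A i) \<noteq> s i"
  proof (cases "trivial_comp L D")
    case True
    hence "spec_rad D (A 0) = 0" by (rule triv_rad_A[OF D])
    thus ?thesis using spos k1 by (intro exI[of _ 0]) auto
  next
    case False
    show ?thesis
    proof (rule ccontr)
      assume "\<not> ?thesis"
      hence eq: "\<forall>i<k. spec_rad D (A i) = s i" by blast
      obtain xD where xD: "\<forall>u\<in>D. 0 < xD u"
          "\<forall>u\<in>D. act D ?F xD u = spec_rad D ?F * xD u"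
          "spec_rad D ?F = phi k F (\<lambda>i. spec_rad D (A i))"
        using eig_comp[OF wc D False] by blast
      have "phi k F (\<lambda>i. spec_rad D (A i)) = phi k F s" using eq by (rule phi_cong)
      moreover have "phi k F s = ?\<Phi>"
      proof -
        have "?\<Phi> = phi k F (\<lambda>i. spec_rad C (A i))" using eig_comp[OF wc C ntC] by blast
        moreover have "s = (\<lambda>i. spec_rad C (A i))" using s_def by (intro ext) simp
        ultimately show ?thesis by simp
      qed
      ultimately have rD: "spec_rad D ?F = ?\<Phi>" using xD(3) by simp
      define yD where "yD w = (if w \<in> D then xD w else 0)" for w
      obtain d0 where d0: "d0 \<in> D" using neD by blast
      have "?\<Phi> \<le> spec_rad ?S ?F"
      proof (rule spec_rad_lower[OF fS _ _ _ _ ])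
        show "\<forall>u\<in>?S. \<forall>w\<in>?S. 0 \<le> ?F u w" using Fnn by blast
        show "\<forall>u\<in>?S. 0 \<le> yD u" unfolding yD_def using xD(1) by (auto intro: less_imp_le)
        show "d0 \<in> ?S" using d0 DS by blast
        show "0 < yD d0" unfolding yD_def using xD(1) d0 by simp
        show "\<forall>u\<in>?S. ?\<Phi> * yD u \<le> act ?S ?F yD u"
        proof
          fix m assume m: "m \<in> ?S"
          have "act ?S ?F yD m = act D ?F xD m" unfolding yD_def by (rule act_ext0[OF DS fS])
          show "?\<Phi> * yD m \<le> act ?S ?F yD m"
          proof (cases "m \<in> D")
            case True
            thus ?thesis using \<open>act ?S ?F yD m = act D ?F xD m\<close> xD(2) rD unfolding yD_def by simp
          next
            case False
            have "0 \<le> act ?S ?F yD m" using Fnn xD(1) unfolding yD_def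
              by (intro act_nonneg) (auto intro: less_imp_le)
            thus ?thesis using False unfolding yD_def by simp
          qed
        qed
      qed
      thus False using rS by simp
    qed
  qed
  show ?thesis using le ne unfolding s_def by blast
qed

end


context kg
begin

lemma main_bwd:
  assumes C: "is_component L C" and pos: "positive_comp k L C"
    and cond: "\<forall>D. is_component L D \<and> D \<subseteq> closure_above L C - C \<longrightarrow>
              (\<forall>i<k. spec_rad D (A i) \<le> spec_rad C (A i)) \<and>
              (\<exists>i<k. spec_rad D (A i) \<noteq> spec_rad C (A i))"
  shows "F_harmonic k L F0 C"
proof -
  let ?W = "closure_above L C"
  let ?S = "closure_above L C - C"
  let ?F = "vmat_F k L F0"
  let ?\<Phi> = "spec_rad C ?F"
  define s where "s i = spec_rad C (A i)" for i
  have spos: "\<forall>i<k. 0 < s i" using pos unfolding positive_comp_def s_def by auto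
  have ntC: "\<not> trivial_comp L C" by (rule pos_nontriv[OF C pos])
  have wc: "well_chosen k L F0" by (rule wc_F0)
  have fW: "finite ?W" using W_sub finV finite_subset by blast
  have fS: "finite ?S" using fW by simp
  have Fnn: "\<forall>u w. 0 \<le> ?F u w" using nn_vmat_F unfolding nn_def by blast
  have sfun: "s = (\<lambda>i. spec_rad C (A i))" using s_def by (intro ext) simp
  have "?\<Phi> = phi k F0 (\<lambda>i. spec_rad C (A i))" using eig_comp[OF wc C ntC] by blast
  hence Phi: "?\<Phi> = phi k F0 s" using sfun by simp
  have Phi0: "0 < ?\<Phi>"
  proof -
    have "0 < s 0" using spos k1 by simp
    also have "s 0 = prodk k s (unitvec 0)" using prodk_unit k1 by simp
    also have "prodk k s (unitvec 0) \<le> phi k F0 s"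
    proof -
      obtain j0 where j0: "j0 < length F0" "F0 ! j0 = unitvec 0"
        using unitvec_F0[of 0] k1 unfolding in_set_conv_nth by auto
      have "prodk k s (F0 ! j0) \<le> (\<Sum>j<length F0. prodk k s (F0 ! j))"
      proof (rule member_le_sum)
        have "\<forall>i<k. 0 \<le> s i" using spos by (auto intro: less_imp_le)
        thus "\<And>x. x \<in> {..<length F0} - {j0} \<Longrightarrow> 0 \<le> prodk k s (F0 ! x)" using prodk_nonneg by blast
      qed (use j0 in auto)
      thus ?thesis using j0 unfolding phi_def by simp
    qed
    finally show ?thesis using Phi by simp
  qed
  have "?S = {} \<or> spec_rad ?S ?F < ?\<Phi>"
  proof (cases "?S = {}")
    case True thus ?thesis by blast
  next
    case False
    have "spec_rad ?S ?F < ?\<Phi>"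
    proof (rule ccontr)
      assume "\<not> ?thesis"
      hence rS: "?\<Phi> \<le> spec_rad ?S ?F" by simp
      hence rS0: "0 < spec_rad ?S ?F" using Phi0 by simp
      obtain y where y: "\<forall>u\<in>?S. 0 \<le> y u" "\<exists>u\<in>?S. 0 < y u"
          "\<forall>u\<in>?S. spec_rad ?S ?F * y u \<le> act ?S ?F y u"
        using subeig[OF fS _ rS0] Fnn by blast
      define supp where "supp = {m \<in> ?S. 0 < y m}"
      have fsupp: "finite supp" using fS unfolding supp_def by (rule finite_subset[rotated]) auto
      have nesupp: "supp \<noteq> {}" using y(2) unfolding supp_def by blast
      define f where "f m = card {w \<in> V. lq w m}" for m
      obtain m0 where m0: "m0 \<in> supp" "\<forall>m\<in>supp. f m \<le> f m0"
      proof -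
        have "Max (f ` supp) \<in> f ` supp" using fsupp nesupp by (intro Max_in) auto
        then obtain m1 where m1: "m1 \<in> supp" "f m1 = Max (f ` supp)" by auto
        have "\<forall>m\<in>supp. f m \<le> Max (f ` supp)" using fsupp by auto
        thus ?thesis using that[OF m1(1)] m1(2) by simp
      qed
      have m0S: "m0 \<in> ?S" using m0 unfolding supp_def by blast
      have m0V: "m0 \<in> V" using m0S W_sub by blast
      define E where "E = {w \<in> V. vequiv L m0 w}"
      have E: "is_component L E" "m0 \<in> E" using comp_of[OF m0V] unfolding E_def by auto
      have ES: "E \<subseteq> ?S"
      proof
        fix w assume w: "w \<in> E"
        hence wm: "lq w m0" "lq m0 w" "w \<in> V" unfolding E_def vequiv_def by auto
        obtain c where c: "c \<in> C" "lq m0 c" using m0S cl_iff by blast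
        have "w \<in> ?W" using cl_iff c wm le_trans by blast
        moreover have "w \<notin> C"
        proof
          assume "w \<in> C"
          hence "m0 \<in> C" using comp_closed[OF C _ m0V] wm by blast
          thus False using m0S by blast
        qed
        ultimately show "w \<in> ?S" by blast
      qed
      have key: "w \<in> E" if u: "u \<in> E" and w: "w \<in> supp" and uw: "?F u w \<noteq> 0" for u w
      proof -
        have uV: "u \<in> V" using u unfolding E_def by blast
        have wV: "w \<in> V" using w W_sub unfolding supp_def by blast
        have "lq u w" using respV_vmat_F[of F0] uV wV uw unfolding respV_def by blast
        moreover have "lq m0 u" using u unfolding E_def vequiv_def by blast
        ultimately have m0w: "lq m0 w" using le_trans by blast
        have sub: "{x \<in> V. lq x m0} \<subseteq> {x \<in> V. lq x w}" using m0w le_trans by blast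
        have "card {x \<in> V. lq x w} \<le> card {x \<in> V. lq x m0}" using m0(2) w unfolding f_def by blast
        moreover have fw: "finite {x \<in> V. lq x w}" using finV by simp
        moreover have "card {x \<in> V. lq x m0} \<le> card {x \<in> V. lq x w}" by (rule card_mono[OF fw sub])
        ultimately have "{x \<in> V. lq x m0} = {x \<in> V. lq x w}"
          using card_subset_eq[OF fw sub] by simp
        moreover have "w \<in> {x \<in> V. lq x w}" using wV le_refl by blast
        ultimately have "lq w m0" by blast
        thus "w \<in> E" using m0w wV unfolding E_def vequiv_def by blast
      qed
      have fE: "finite E" by (rule finD[OF convex_comp[OF E(1)]])
      have actE: "act ?S ?F y u = act E ?F y u" if u: "u \<in> E" for u
        unfolding act_def
      proof (rule sum.mono_neutral_right[OF fS ES], intro ballI)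
        fix w assume w: "w \<in> ?S - E"
        show "?F u w * y w = 0"
        proof (cases "0 < y w")
          case True
          hence "w \<in> supp" using w unfolding supp_def by blast
          hence "?F u w = 0" using key[OF u] w by blast
          thus ?thesis by simp
        next
          case False
          hence "y w = 0" using y(1) w by force
          thus ?thesis by simp
        qed
      qed
      have "spec_rad ?S ?F \<le> spec_rad E ?F"
      proof (rule spec_rad_lower[OF fE _ _ E(2)])
        show "\<forall>u\<in>E. \<forall>w\<in>E. 0 \<le> ?F u w" using Fnn by blast
        show "\<forall>u\<in>E. 0 \<le> y u" using y(1) ES by blast
        show "0 < y m0" using m0 unfolding supp_def by blast
        show "\<forall>u\<in>E. spec_rad ?S ?F * y u \<le> act E ?F y u"
        proof
          fix u assume u: "u \<in> E"
          hence "u \<in> ?S" using ES by blast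
          hence "spec_rad ?S ?F * y u \<le> act ?S ?F y u" using y(3) by blast
          thus "spec_rad ?S ?F * y u \<le> act E ?F y u" using actE[OF u] by simp
        qed
      qed
      show False
      proof (cases "trivial_comp L E")
        case True
        hence "spec_rad E ?F = 0" by (rule triv_rad_F[OF wc E(1)])
        thus False using \<open>spec_rad ?S ?F \<le> spec_rad E ?F\<close> rS0 by simp
      next
        case False
        define r where "r i = spec_rad E (A i)" for i
        have rE: "spec_rad E ?F = phi k F0 r"
        proof -
          have "spec_rad E ?F = phi k F0 (\<lambda>i. spec_rad E (A i))" using eig_comp[OF wc E(1) False] by blast
          moreover have "r = (\<lambda>i. spec_rad E (A i))" using r_def by (intro ext) simp
          ultimately show ?thesis by simp
        qed
        from cond E(1) ES have c1: "\<forall>i<k. r i \<le> s i" and c2: "\<exists>i<k. r i \<noteq> s i"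
          unfolding r_def s_def by blast+
        obtain i where i: "i < k" "r i \<noteq> s i" using c2 by blast
        have rs: "\<forall>i<k. 0 \<le> r i \<and> r i \<le> s i" using c1 spec_rad_nonneg[OF fE] unfolding r_def by auto
        have "phi k F0 r < phi k F0 s"
          by (rule phi_strict[OF rs i(1) _ unitvec_F0[OF i(1)]]) (use c1 i in force)
        thus False using rE Phi rS \<open>spec_rad ?S ?F \<le> spec_rad E ?F\<close> by simp
      qed
    qed
    thus ?thesis by blast
  qed
  thus ?thesis unfolding F_harmonic_def using ntC by blast
qed

end

theorem lemma7p11:
  fixes k :: nat and L :: "'a kgraph" and C :: "'a set"
  assumes "is_kgraph k L" and "finite_kgraph k L" and "no_sources k L"
    and "is_component L C"
  shows "positive_harmonic k L C \<longleftrightarrow>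
           positive_comp k L C \<and>
           (\<forall>D. is_component L D \<and> D \<subseteq> closure_above L C - C \<longrightarrow>
              (\<forall>i<k. spec_rad D (vmat L i) \<le> spec_rad C (vmat L i)) \<and>
              (\<exists>i<k. spec_rad D (vmat L i) \<noteq> spec_rad C (vmat L i)))"
proof -
  interpret kg k L using assms(1,2) by unfold_locales
  show ?thesis
  proof
    assume ph: "positive_harmonic k L C"
    then obtain F where pos: "positive_comp k L C" and wc: "well_chosen k L F" and h: "F_harmonic k L F C"
      unfolding positive_harmonic_def by blast
    show "positive_comp k L C \<and>
           (\<forall>D. is_component L D \<and> D \<subseteq> closure_above L C - C \<longrightarrow>
              (\<forall>i<k. spec_rad D (vmat L i) \<le> spec_rad C (vmat L i)) \<and>
              (\<exists>i<k. spec_rad D (vmat L i) \<noteq> spec_rad C (vmat L i)))"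
      using main_fwd[OF assms(4) wc pos h] pos by blast
  next
    assume r: "positive_comp k L C \<and>
           (\<forall>D. is_component L D \<and> D \<subseteq> closure_above L C - C \<longrightarrow>
              (\<forall>i<k. spec_rad D (vmat L i) \<le> spec_rad C (vmat L i)) \<and>
              (\<exists>i<k. spec_rad D (vmat L i) \<noteq> spec_rad C (vmat L i)))"
    hence "F_harmonic k L F0 C" using main_bwd[OF assms(4)] by blast
    thus "positive_harmonic k L C" unfolding positive_harmonic_def using r wc_F0 by blast
  qed
qed


end
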